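(* Let $G$ be a simple graph with $n$ vertices and let $F$ be obtained from $G$ by a symmetric $\mathcal K_{xy}$-operation. Then $t(G)\ge t(F)$, $t(K_n-E(G))\ge t(K_n-E(F))$, and moreover $P(\lambda,K_n-E(G))\ge P(\lambda,K_n-E(F))$ for every real $\lambda\ge n$.
   Context: All graphs are finite, undirected, without loops. $t(H)$ denotes the number of spanning trees of $H$; $K_n-E(G)$ is the complement of $G$ in the complete graph $K_n$ on $V(G)$. For a graph $H$ on $n$ vertices let $L(H)=D(H)-A(H)$ be its Laplacian matrix and write $\det(\lambda I-L(H))=\lambda P(\lambda,H)$ ($P$ is the Laplacian polynomial). $\mathcal K_{xy}$-operation: let $G$ be a simple graph, $x\ne y$ vertices, $\mathcal K$ an induced subgraph of $G$ containing $x$ and $y$, and $N(v)$ the neighbourhood of $v$. Put $X=N(x)\setminus(V(\mathcal K)\cup N(y))$, $Y=N(y)\setminus(V(\mathcal K)\cup N(x))$, $[x,X]=\{xv:v\in X\}$, $[y,X]=\{yv:v\in X\}$, $[y,Y]=\{yv:v\in Y\}$. The graph $\mathcal K_{xy}(G)=(G-[x,X])\cup[y,X]$ (on the same vertex set) is obtained from $G$ by the $\mathcal K_{xy}$-operation. The operation is called symmetric if the graph $G-([x,X]\cup[y,Y])$ has an automorphism $\alpha$ with $\alpha(x)=y$, $\alpha(y)=x$, $\alpha(V(\mathcal K))=V(\mathcal K)$, and $\alpha(v)=v$ for every $v\in X\cup Y$. *)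

theory Defs
  imports "HOL-Analysis.Analysis" "HOL-Computational_Algebra.Polynomial"
begin

text \<open>A graph on the (finite) vertex type 'a is given by an adjacency relation.
  The vertex set is UNIV, so n = CARD('a).\<close>

definition simple_graph :: "('a \<Rightarrow> 'a \<Rightarrow> bool) \<Rightarrow> bool" where
  "simple_graph E \<longleftrightarrow> (\<forall>u v. E u v \<longrightarrow> E v u) \<and> (\<forall>v. \<not> E v v)"

definition nbhd :: "('a \<Rightarrow> 'a \<Rightarrow> bool) \<Rightarrow> 'a \<Rightarrow> 'a set" where
  "nbhd E v = {u. E v u}"

definition edges :: "('a \<Rightarrow> 'a \<Rightarrow> bool) \<Rightarrow> 'a set set" where
  "edges E = {{u, v} | u v. E u v}"

definition compl_graph :: "('a \<Rightarrow> 'a \<Rightarrow> bool) \<Rightarrow> 'a \<Rightarrow> 'a \<Rightarrow> bool" where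
  "compl_graph E u v \<longleftrightarrow> u \<noteq> v \<and> \<not> E u v"

definition edge_rel :: "'a set set \<Rightarrow> 'a \<Rightarrow> 'a \<Rightarrow> bool" where
  "edge_rel T a b \<longleftrightarrow> {a, b} \<in> T \<and> a \<noteq> b"

definition connected_es :: "'a set set \<Rightarrow> bool" where
  "connected_es T \<longleftrightarrow> (\<forall>u v. (edge_rel T)\<^sup>*\<^sup>* u v)"

text \<open>Acyclic: no edge lies on a cycle, i.e. the endpoints of every edge are not
  joined by a path avoiding that edge.\<close>
definition acyclic_es :: "'a set set \<Rightarrow> bool" where
  "acyclic_es T \<longleftrightarrow> (\<forall>e\<in>T. \<forall>a b. e = {a, b} \<longrightarrow> \<not> (edge_rel (T - {e}))\<^sup>*\<^sup>* a b)"

definition spanning_trees :: "('a \<Rightarrow> 'a \<Rightarrow> bool) \<Rightarrow> 'a set set set" where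
  "spanning_trees E = {T. T \<subseteq> edges E \<and> connected_es T \<and> acyclic_es T}"

definition num_spanning_trees :: "('a::finite \<Rightarrow> 'a \<Rightarrow> bool) \<Rightarrow> nat" where
  "num_spanning_trees E = card (spanning_trees E)"

definition degree :: "('a::finite \<Rightarrow> 'a \<Rightarrow> bool) \<Rightarrow> 'a \<Rightarrow> nat" where
  "degree E v = card (nbhd E v)"

definition laplacian :: "('a::finite \<Rightarrow> 'a \<Rightarrow> bool) \<Rightarrow> real^'a^'a" where
  "laplacian E = (\<chi> i j. (if i = j then real (degree E i) else 0) - (if E i j then 1 else 0))"

definition lap_charpoly :: "('a::finite \<Rightarrow> 'a \<Rightarrow> bool) \<Rightarrow> real poly" where
  "lap_charpoly E = det (\<chi> i j. (if i = j then [:0, 1:] else 0) - [: laplacian E $ i $ j :])"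

text \<open>Laplacian polynomial P: det(\<lambda> I - L(H)) = \<lambda> P(\<lambda>, H).\<close>
definition lap_poly :: "('a::finite \<Rightarrow> 'a \<Rightarrow> bool) \<Rightarrow> real poly" where
  "lap_poly E = lap_charpoly E div [:0, 1:]"

text \<open>The K_xy-operation; the induced subgraph K is given by its vertex set.\<close>
definition Xset :: "('a \<Rightarrow> 'a \<Rightarrow> bool) \<Rightarrow> 'a set \<Rightarrow> 'a \<Rightarrow> 'a \<Rightarrow> 'a set" where
  "Xset E K x y = nbhd E x - (K \<union> nbhd E y)"

definition Kxy_op :: "('a \<Rightarrow> 'a \<Rightarrow> bool) \<Rightarrow> 'a set \<Rightarrow> 'a \<Rightarrow> 'a \<Rightarrow> 'a \<Rightarrow> 'a \<Rightarrow> bool" where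
  "Kxy_op E K x y u v \<longleftrightarrow>
     (E u v \<and> \<not> (\<exists>w\<in>Xset E K x y. {u, v} = {x, w}))
     \<or> (\<exists>w\<in>Xset E K x y. {u, v} = {y, w})"

definition remove_xXyY :: "('a \<Rightarrow> 'a \<Rightarrow> bool) \<Rightarrow> 'a set \<Rightarrow> 'a \<Rightarrow> 'a \<Rightarrow> 'a \<Rightarrow> 'a \<Rightarrow> bool" where
  "remove_xXyY E K x y u v \<longleftrightarrow> E u v \<and>
     \<not> (\<exists>w\<in>Xset E K x y. {u, v} = {x, w}) \<and> \<not> (\<exists>w\<in>Xset E K y x. {u, v} = {y, w})"

definition graph_automorphism :: "('a \<Rightarrow> 'a \<Rightarrow> bool) \<Rightarrow> ('a \<Rightarrow> 'a) \<Rightarrow> bool" where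
  "graph_automorphism E \<alpha> \<longleftrightarrow> bij \<alpha> \<and> (\<forall>u v. E (\<alpha> u) (\<alpha> v) \<longleftrightarrow> E u v)"

definition symmetric_Kxy :: "('a \<Rightarrow> 'a \<Rightarrow> bool) \<Rightarrow> 'a set \<Rightarrow> 'a \<Rightarrow> 'a \<Rightarrow> bool" where
  "symmetric_Kxy E K x y \<longleftrightarrow> (\<exists>\<alpha>. graph_automorphism (remove_xXyY E K x y) \<alpha> \<and>
     \<alpha> x = y \<and> \<alpha> y = x \<and> \<alpha> ` K = K \<and> (\<forall>v \<in> Xset E K x y \<union> Xset E K y x. \<alpha> v = v))"

end

theory Submission
  imports Defs
begin

abbreviation reach :: "'a set set \<Rightarrow> 'a \<Rightarrow> 'a \<Rightarrow> bool" where
  "reach T \<equiv> (edge_rel T)\<^sup>*\<^sup>*"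

lemma edge_rel_sym: "edge_rel T a b \<Longrightarrow> edge_rel T b a"
  by (auto simp: edge_rel_def insert_commute)

lemma reach_sym: "reach T a b \<Longrightarrow> reach T b a"
  by (induction rule: rtranclp_induct) (auto intro: converse_rtranclp_into_rtranclp edge_rel_sym)

lemma edge_rel_mono: "T \<subseteq> T' \<Longrightarrow> edge_rel T a b \<Longrightarrow> edge_rel T' a b"
  by (auto simp: edge_rel_def)

lemma reach_mono: assumes "T \<subseteq> T'" "reach T a b" shows "reach T' a b"
  using assms(2) by (induction rule: rtranclp_induct) (auto intro: rtranclp.rtrancl_into_rtrancl edge_rel_mono[OF assms(1)])

lemma reach_edge: "{a,b} \<in> T \<Longrightarrow> a \<noteq> b \<Longrightarrow> reach T a b"
  by (auto simp: edge_rel_def)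

lemma reach_cut:
  assumes "\<And>u v. edge_rel T u v \<Longrightarrow> (u \<in> U \<longleftrightarrow> v \<in> U)" "reach T a b"
  shows "a \<in> U \<longleftrightarrow> b \<in> U"
  using assms(2) by (induction rule: rtranclp_induct) (auto dest: assms(1))

definition proper :: "'a set set \<Rightarrow> bool" where
  "proper T \<longleftrightarrow> (\<forall>e\<in>T. \<exists>u v. u \<noteq> v \<and> e = {u, v})"

lemma acyclicD: "acyclic_es T \<Longrightarrow> {a,b} \<in> T \<Longrightarrow> \<not> reach (T - {{a,b}}) a b"
  by (auto simp: acyclic_es_def)

lemma comp_split:
  assumes "connected_es T" "{a,b} \<in> T"
  shows "reach (T - {{a,b}}) a v \<or> reach (T - {{a,b}}) b v"
proof -
  have "reach T a v" using assms(1) by (auto simp: connected_es_def)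
  then show ?thesis
  proof (induction rule: rtranclp_induct)
    case base then show ?case by simp
  next
    case (step v w)
    show ?case
    proof (cases "{v,w} = {a,b}")
      case True
      then have "w = a \<or> w = b" by (auto simp: doubleton_eq_iff)
      then show ?thesis by auto
    next
      case False
      then have "edge_rel (T - {{a,b}}) v w" using step(2) by (auto simp: edge_rel_def)
      then show ?thesis using step(3) by (auto intro: rtranclp.rtrancl_into_rtrancl)
    qed
  qed
qed

lemma exchange:
  assumes con: "connected_es T" and acy: "acyclic_es T" and pr: "proper T"
    and e: "{a,b} \<in> T" and ab: "a \<noteq> b" and cd: "c \<noteq> d"
    and rc: "reach (T - {{a,b}}) a c" and rd: "reach (T - {{a,b}}) b d"
  shows "connected_es (insert {c,d} (T - {{a,b}}))" "acyclic_es (insert {c,d} (T - {{a,b}}))"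
    "proper (insert {c,d} (T - {{a,b}}))"
proof -
  define T' where "T' = insert {c,d} (T - {{a,b}})"
  have sub: "T - {{a,b}} \<subseteq> T'" by (auto simp: T'_def)
  have nab: "\<not> reach (T - {{a,b}}) a b" using acyclicD[OF acy e] .
  have "reach T' a c" using reach_mono[OF sub rc] .
  moreover have "reach T' c d" using cd by (auto simp: T'_def intro!: reach_edge)
  moreover have "reach T' d b" using reach_mono[OF sub reach_sym[OF rd]] .
  ultimately have ab': "reach T' a b" by (meson rtranclp_trans)
  have toa: "reach T' v a" for v
  proof -
    from comp_split[OF con e, of v] show ?thesis
    proof
      assume "reach (T - {{a,b}}) a v" then show ?thesis using reach_mono[OF sub] reach_sym by metis
    next
      assume "reach (T - {{a,b}}) b v"
      then have "reach T' v b" using reach_mono[OF sub] reach_sym by metis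
      then show ?thesis using reach_sym[OF ab'] by (meson rtranclp_trans)
    qed
  qed
  show "connected_es T'" unfolding connected_es_def
    using toa reach_sym by (meson rtranclp_trans)
  show "proper T'" using pr cd by (auto simp: proper_def T'_def)
  have cdn: "{c,d} \<notin> T - {{a,b}}"
  proof
    assume "{c,d} \<in> T - {{a,b}}"
    then have "reach (T - {{a,b}}) c d" using cd by (intro reach_edge)
    then have "reach (T - {{a,b}}) a b" using rc reach_sym[OF rd] by (meson rtranclp_trans)
    then show False using nab by simp
  qed
  define Aset where "Aset = {v. reach (T - {{a,b}}) a v}"
  have clA: "edge_rel (T - {{a,b}}) u v \<Longrightarrow> (u \<in> Aset \<longleftrightarrow> v \<in> Aset)" for u v
    unfolding Aset_def mem_Collect_eq by (meson edge_rel_sym rtranclp.rtrancl_into_rtrancl)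
  have cA: "c \<in> Aset" using rc by (simp add: Aset_def)
  have dA: "d \<notin> Aset"
  proof
    assume "d \<in> Aset"
    then have "reach (T - {{a,b}}) a d" by (simp add: Aset_def)
    then have "reach (T - {{a,b}}) a b" using reach_sym[OF rd] by (meson rtranclp_trans)
    then show False using nab by simp
  qed
  show "acyclic_es T'" unfolding acyclic_es_def
  proof (intro ballI allI impI notI)
    fix g p q
    assume gT: "g \<in> T'" and g: "g = {p,q}" and r: "reach (T' - {g}) p q"
    show False
    proof (cases "g = {c,d}")
      case True
      then have "T' - {g} = T - {{a,b}}" using cdn by (auto simp: T'_def)
      with r have "reach (T - {{a,b}}) p q" by simp
      moreover have "(p = c \<and> q = d) \<or> (p = d \<and> q = c)" using True g by (auto simp: doubleton_eq_iff)
      ultimately have "reach (T - {{a,b}}) c d" using reach_sym by metis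
      then have "reach (T - {{a,b}}) a b" using rc reach_sym[OF rd] by (meson rtranclp_trans)
      then show False using nab by simp
    next
      case False
      then have gT0: "g \<in> T" "g \<noteq> {a,b}" using gT by (auto simp: T'_def)
      have "\<exists>u v. u \<noteq> v \<and> g = {u,v}" using pr gT0(1) by (simp add: proper_def)
      then obtain u v where "u \<noteq> v" "g = {u,v}" by blast
      then have pq: "p \<noteq> q" using g by (auto simp: doubleton_eq_iff)
      have ng: "\<not> reach (T - {g}) p q" using acyclicD[OF acy, of p q] gT0 g by simp
      define U where "U = {v. reach (T - {g}) p v}"
      have clU: "edge_rel (T - {g}) u v \<Longrightarrow> (u \<in> U \<longleftrightarrow> v \<in> U)" for u v
        unfolding U_def mem_Collect_eq by (meson edge_rel_sym rtranclp.rtrancl_into_rtrancl)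
      have pU: "p \<in> U" "q \<notin> U" using ng by (auto simp: U_def)
      have gA: "p \<in> Aset \<longleftrightarrow> q \<in> Aset"
        using clA[of p q] gT0 g pq by (auto simp: edge_rel_def)
      have ecase: "edge_rel (T' - {g}) u v \<Longrightarrow> {u,v} = {c,d} \<or> (edge_rel (T - {g}) u v \<and> edge_rel (T - {{a,b}}) u v)" for u v
        by (auto simp: edge_rel_def T'_def)
      show False
      proof (cases "c \<in> U \<longleftrightarrow> d \<in> U")
        case True
        have "edge_rel (T' - {g}) u v \<Longrightarrow> (u \<in> U \<longleftrightarrow> v \<in> U)" for u v
          using ecase[of u v] clU[of u v] True by (auto simp: doubleton_eq_iff)
        from reach_cut[OF this r] pU show False by simp
      next
        case False
        show False
        proof (cases "c \<in> U")
          case True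
          with False have dU: "d \<notin> U" by simp
          define Y where "Y = {v. v \<in> U \<longleftrightarrow> v \<in> Aset}"
          have "u \<in> Y \<longleftrightarrow> v \<in> Y" if "edge_rel (T' - {g}) u v" for u v
          proof -
            from ecase[OF that] show ?thesis
            proof
              assume "{u,v} = {c,d}"
              then have "(u = c \<and> v = d) \<or> (u = d \<and> v = c)" by (auto simp: doubleton_eq_iff)
              then show ?thesis using True dU cA dA by (auto simp: Y_def)
            next
              assume "edge_rel (T - {g}) u v \<and> edge_rel (T - {{a,b}}) u v"
              then show ?thesis using clU[of u v] clA[of u v] by (simp add: Y_def)
            qed
          qed
          from reach_cut[OF this r] pU gA show False by (simp add: Y_def)
        next
          case cU: False
          with False have dU: "d \<in> U" by simp
          define Y where "Y = {v. v \<in> U \<longleftrightarrow> v \<notin> Aset}"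
          have "u \<in> Y \<longleftrightarrow> v \<in> Y" if "edge_rel (T' - {g}) u v" for u v
          proof -
            from ecase[OF that] show ?thesis
            proof
              assume "{u,v} = {c,d}"
              then have "(u = c \<and> v = d) \<or> (u = d \<and> v = c)" by (auto simp: doubleton_eq_iff)
              then show ?thesis using cU dU cA dA by (auto simp: Y_def)
            next
              assume "edge_rel (T - {g}) u v \<and> edge_rel (T - {{a,b}}) u v"
              then show ?thesis using clU[of u v] clA[of u v] by (simp add: Y_def)
            qed
          qed
          from reach_cut[OF this r] pU gA show False by (simp add: Y_def)
        qed
      qed
    qed
  qed
qed

definition mv :: "'a set set \<Rightarrow> 'a \<Rightarrow> 'a \<Rightarrow> 'a set \<Rightarrow> 'a set set" where
  "mv T z z' W = {e \<in> T. \<not> (\<exists>w\<in>W. e = {z,w})} \<union> {{z',w} | w. w \<in> W \<and> {z,w} \<in> T}"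

definition star_edges :: "'a \<Rightarrow> 'a set \<Rightarrow> 'a set set" where
  "star_edges z W = {{z,w} | w. w \<in> W}"

lemma dbl1: "({z,w} = {z,v}) = (w = v)" by (metis doubleton_eq_iff)
lemma dbl2: "z \<noteq> z' \<Longrightarrow> w \<noteq> z \<Longrightarrow> {z',w} \<noteq> {z,v}" by (metis insertI1 insert_commute insert_iff singletonD)

lemma mv_empty: "mv T z z' {} = T" by (auto simp: mv_def)

lemma mv_insert_in:
  assumes "z \<noteq> z'" "w \<noteq> z" "w \<noteq> z'" "\<forall>v\<in>W. v \<noteq> z \<and> v \<noteq> z'" "w \<notin> W" "{z,w} \<in> T"
  shows "mv T z z' (insert w W) = insert {z',w} (mv T z z' W - {{z,w}})"
proof -
  have n1: "\<And>v. v \<in> insert w W \<Longrightarrow> {z',v} \<noteq> {z,w}" using assms(1,2,4) dbl2 by blast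
  have n2: "\<And>v. v \<in> W \<Longrightarrow> {z,v} \<noteq> {z,w}" using assms(5) dbl1 by metis
  show ?thesis unfolding mv_def using assms(6) n1 n2 by (auto simp: dbl1)
qed

lemma mv_insert_notin:
  assumes "{z,w} \<notin> T"
  shows "mv T z z' (insert w W) = mv T z z' W"
  using assms unfolding mv_def by (auto simp: doubleton_eq_iff)

lemma mv_sub: "T - star_edges z W \<subseteq> mv T z z' W"
  by (auto simp: mv_def star_edges_def)

lemma mv_tree:
  assumes "finite W" "connected_es T" "acyclic_es T" "proper T" "z \<noteq> z'"
    "\<forall>w\<in>W. w \<noteq> z \<and> w \<noteq> z'" "reach (T - star_edges z W) z' z"
  shows "connected_es (mv T z z' W) \<and> acyclic_es (mv T z z' W) \<and> proper (mv T z z' W)"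
  using assms(1,6,7)
proof (induction W rule: finite_induct)
  case empty
  then show ?case using assms by (simp add: mv_empty)
next
  case (insert w W)
  have "T - star_edges z (insert w W) \<subseteq> T - star_edges z W" by (auto simp: star_edges_def)
  then have IH: "connected_es (mv T z z' W) \<and> acyclic_es (mv T z z' W) \<and> proper (mv T z z' W)"
    using insert(1,2,3,4) reach_mono[OF _ insert(5)] by simp
  show ?case
  proof (cases "{z,w} \<in> T")
    case True
    let ?T1 = "mv T z z' W"
    have "\<And>v. v \<in> W \<Longrightarrow> {z,w} \<noteq> {z,v}" using insert(2) dbl1 by metis
    then have in1: "{z,w} \<in> ?T1" using True by (auto simp: mv_def)
    have "T - star_edges z (insert w W) \<subseteq> ?T1 - {{z,w}}"
      using mv_sub[of T z W z'] by (auto simp: star_edges_def)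
    then have r: "reach (?T1 - {{z,w}}) z z'"
      using reach_mono[OF _ reach_sym[OF insert(5)]] by blast
    have eq: "mv T z z' (insert w W) = insert {z',w} (?T1 - {{z,w}})"
      using mv_insert_in[OF assms(5) _ _ _ insert(2) True] insert(4) by auto
    show ?thesis unfolding eq
      using exchange[of ?T1 z w z' w, OF _ _ _ in1 _ _ r rtranclp.rtrancl_refl] IH insert(4) by auto
  next
    case False
    then show ?thesis using IH by (simp add: mv_insert_notin)
  qed
qed

lemma mv_inv:
  assumes "z \<noteq> z'" "\<forall>w\<in>W. w \<noteq> z \<and> w \<noteq> z'" "\<forall>w\<in>W. {z',w} \<notin> T"
  shows "mv (mv T z z' W) z' z W = T"
proof -
  have n: "\<And>v w. v \<in> W \<Longrightarrow> w \<in> W \<Longrightarrow> {z',v} \<noteq> {z,w}" using assms(1,2) dbl2 by metis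
  have n': "\<And>v w. v \<in> W \<Longrightarrow> w \<in> W \<Longrightarrow> {z,v} \<noteq> {z',w}" using n by metis
  show ?thesis unfolding mv_def using assms(3) n n' by (auto simp: dbl1)
qed

definition img :: "('a \<Rightarrow> 'b) \<Rightarrow> 'a set set \<Rightarrow> 'b set set" where
  "img f T = (\<lambda>e. f ` e) ` T"

lemma reach_img:
  assumes "inj f" "reach T u v"
  shows "reach (img f T) (f u) (f v)"
  using assms(2)
proof (induction rule: rtranclp_induct)
  case base then show ?case by simp
next
  case (step v w)
  have "edge_rel (img f T) (f v) (f w)"
  proof -
    have "f ` {v,w} \<in> img f T" using step(2) unfolding edge_rel_def img_def by blast
    moreover have "f v \<noteq> f w" using step(2) assms(1) by (auto simp: edge_rel_def inj_eq)
    ultimately show ?thesis by (simp add: edge_rel_def)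
  qed
  then show ?case using step(3) by (auto intro: rtranclp.rtrancl_into_rtrancl)
qed

lemma img_inv:
  assumes "bij f" shows "img (inv f) (img f T) = T"
proof -
  have "(\<lambda>e. inv f ` e) ` (\<lambda>e. f ` e) ` T = (\<lambda>e. inv f ` f ` e) ` T" by (simp add: image_image)
  also have "\<dots> = T" using assms by (simp add: bij_is_inj image_inv_f_f)
  finally show ?thesis by (simp add: img_def)
qed

lemma inj_img: assumes "inj f" shows "inj (img f)"
proof -
  have i1: "inj ((`) f)" using inj_image_eq_iff[OF assms] by (auto simp: inj_def)
  show ?thesis using inj_image_eq_iff[OF i1] by (auto simp: inj_def img_def)
qed

lemma tree_img:
  assumes "bij f" "connected_es T" "acyclic_es T" "proper T"
  shows "connected_es (img f T) \<and> acyclic_es (img f T) \<and> proper (img f T)"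
proof (intro conjI)
  have inj: "inj f" using assms(1) by (simp add: bij_is_inj)
  have injinv: "inj (inv f)" using assms(1) by (simp add: bij_imp_bij_inv bij_is_inj)
  have finv: "f (inv f a) = a" for a using assms(1) by (simp add: bij_is_surj surj_f_inv_f)
  show "connected_es (img f T)" unfolding connected_es_def
  proof (intro allI)
    fix a b
    have "reach T (inv f a) (inv f b)" using assms(2) by (simp add: connected_es_def)
    from reach_img[OF inj this] show "reach (img f T) a b" by (simp add: finv)
  qed
  show "proper (img f T)" unfolding proper_def
  proof
    fix e' assume "e' \<in> img f T"
    then obtain e where e: "e \<in> T" "e' = f ` e" by (auto simp: img_def)
    then obtain u v where "u \<noteq> v" "e = {u,v}" using assms(4) by (auto simp: proper_def)
    then show "\<exists>u v. u \<noteq> v \<and> e' = {u, v}" using e inj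
      by (intro exI[of _ "f u"] exI[of _ "f v"]) (auto simp: inj_eq)
  qed
  show "acyclic_es (img f T)" unfolding acyclic_es_def
  proof (intro ballI allI impI notI)
    fix e' a b assume e': "e' \<in> img f T" "e' = {a,b}" and r: "reach (img f T - {e'}) a b"
    obtain e where e: "e \<in> T" "e' = f ` e" using e'(1) by (auto simp: img_def)
    have ee: "e = {inv f a, inv f b}" using e e'(2) assms(1)
    proof -
      have "e = inv f ` f ` e" using inj by (simp add: image_inv_f_f)
      also have "\<dots> = inv f ` {a,b}" using e e'(2) by simp
      finally show ?thesis by simp
    qed
    have "img f T - {e'} = img f (T - {e})" using e inj
      by (auto simp: img_def inj_image_eq_iff)
    then have "reach (img (inv f) (img f (T - {e}))) (inv f a) (inv f b)"
      using reach_img[OF injinv r] by simp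
    then have "reach (T - {e}) (inv f a) (inv f b)" by (simp add: img_inv[OF assms(1)])
    then show False using acyclicD[OF assms(3), of "inv f a" "inv f b"] e ee by simp
  qed
qed


definition addE :: "('a \<Rightarrow> 'a \<Rightarrow> bool) \<Rightarrow> 'a \<Rightarrow> 'a set \<Rightarrow> 'a \<Rightarrow> 'a \<Rightarrow> bool" where
  "addE H z W u v \<longleftrightarrow> H u v \<or> (u = z \<and> v \<in> W) \<or> (v = z \<and> u \<in> W)"

lemma finite_spanning_trees: "finite (spanning_trees (E :: 'a::finite \<Rightarrow> 'a \<Rightarrow> bool))"
proof -
  have "spanning_trees E \<subseteq> Pow (Pow UNIV)" by auto
  then show ?thesis by (rule finite_subset) simp
qed

locale kel =
  fixes H :: "'a::finite \<Rightarrow> 'a \<Rightarrow> bool" and \<alpha> :: "'a \<Rightarrow> 'a" and x y :: 'a and A B :: "'a set"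
  assumes Hsym: "\<And>u v. H u v \<Longrightarrow> H v u" and Hirr: "\<And>v. \<not> H v v"
    and bij: "bij \<alpha>" and aut: "\<And>u v. H (\<alpha> u) (\<alpha> v) \<longleftrightarrow> H u v"
    and ax: "\<alpha> x = y" and ay: "\<alpha> y = x" and xy: "x \<noteq> y" and AB: "A \<inter> B = {}"
    and xS: "x \<notin> A \<union> B" and yS: "y \<notin> A \<union> B" and fixS: "\<And>w. w \<in> A \<union> B \<Longrightarrow> \<alpha> w = w"
    and noHx: "\<And>w. w \<in> A \<union> B \<Longrightarrow> \<not> H x w" and noHy: "\<And>w. w \<in> A \<union> B \<Longrightarrow> \<not> H y w"
begin

abbreviation "G0 \<equiv> addE (addE H x A) y B"
abbreviation "F0 \<equiv> addE H y (A \<union> B)"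
abbreviation "F1 \<equiv> addE (addE H y A) x B"

lemma inj_alpha: "inj \<alpha>" using bij by (simp add: bij_is_inj)

lemma F0_edge: "e \<in> edges F0 \<Longrightarrow> \<exists>u v. e = {u,v} \<and> (H u v \<or> (u = y \<and> v \<in> A \<union> B))"
  unfolding edges_def addE_def by (auto simp: insert_commute)

lemma tree_props:
  assumes "T \<in> spanning_trees F0"
  shows "connected_es T" "acyclic_es T" "proper T" "\<And>w. w \<in> A \<union> B \<Longrightarrow> {x,w} \<notin> T"
proof -
  show "connected_es T" "acyclic_es T" using assms by (auto simp: spanning_trees_def)
  have sub: "T \<subseteq> edges F0" using assms by (auto simp: spanning_trees_def)
  show "proper T" unfolding proper_def
  proof
    fix e assume "e \<in> T"
    then obtain u v where "e = {u,v}" "H u v \<or> (u = y \<and> v \<in> A \<union> B)" using F0_edge sub by blast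
    moreover have "u \<noteq> v" using calculation(2) Hirr yS by auto
    ultimately show "\<exists>u v. u \<noteq> v \<and> e = {u, v}" by blast
  qed
  show "{x,w} \<notin> T" if w: "w \<in> A \<union> B" for w
  proof
    assume "{x,w} \<in> T"
    then obtain u v where uv: "{x,w} = {u,v}" "H u v \<or> (u = y \<and> v \<in> A \<union> B)" using F0_edge sub by blast
    show False
    proof (cases "H u v")
      case True
      then have "H x w \<or> H w x" using uv(1) by (auto simp: doubleton_eq_iff)
      then show False using noHx[OF w] Hsym by blast
    next
      case False
      then have "u = y" "v \<in> A \<union> B" using uv by auto
      then show False using uv(1) xy xS by (auto simp: doubleton_eq_iff)
    qed
  qed
qed

definition case1 :: "'a set set \<Rightarrow> bool" where
  "case1 T \<longleftrightarrow> reach (T - star_edges y A) x y"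

definition Phi :: "'a set set \<Rightarrow> 'a set set" where
  "Phi T = (if case1 T then mv T y x A else img \<alpha> (mv T y x B))"

lemma case2_w0:
  assumes T: "T \<in> spanning_trees F0" and nc: "\<not> case1 T"
  shows "\<exists>w0\<in>A. {y,w0} \<in> T \<and> reach (T - star_edges y A - star_edges y B) x w0"
proof -
  note tp = tree_props[OF T]
  define U where "U = {v. reach (T - star_edges y A) x v}"
  have yU: "y \<notin> U" using nc by (simp add: U_def case1_def)
  have clU: "edge_rel (T - star_edges y A) u v \<Longrightarrow> (u \<in> U \<longleftrightarrow> v \<in> U)" for u v
    unfolding U_def mem_Collect_eq by (meson edge_rel_sym rtranclp.rtrancl_into_rtrancl)
  have rxy: "reach T x y" using tp(1) by (simp add: connected_es_def)
  have "\<not> (\<forall>u v. edge_rel T u v \<longrightarrow> (u \<in> U \<longleftrightarrow> v \<in> U))"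
  proof
    assume "\<forall>u v. edge_rel T u v \<longrightarrow> (u \<in> U \<longleftrightarrow> v \<in> U)"
    then have "x \<in> U \<longleftrightarrow> y \<in> U" using reach_cut[OF _ rxy] by blast
    moreover have "x \<in> U" by (simp add: U_def)
    ultimately show False using yU by simp
  qed
  then obtain u v where uv: "edge_rel T u v" "(u \<in> U) \<noteq> (v \<in> U)" by blast
  have "{u,v} \<in> star_edges y A"
  proof (rule ccontr)
    assume "{u,v} \<notin> star_edges y A"
    then have "edge_rel (T - star_edges y A) u v" using uv(1) by (auto simp: edge_rel_def)
    then show False using clU uv(2) by blast
  qed
  then obtain w0 where w0: "w0 \<in> A" "{u,v} = {y,w0}" by (auto simp: star_edges_def)
  have "w0 \<in> U" using w0(2) uv(2) yU by (auto simp: doubleton_eq_iff)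
  then have r0: "reach (T - star_edges y A) x w0" by (simp add: U_def)
  have inT: "{y,w0} \<in> T" using uv(1) w0(2) by (simp add: edge_rel_def)
  have strong: "reach (T - star_edges y A) x v \<Longrightarrow> reach (T - star_edges y A - star_edges y B) x v" for v
  proof (induction rule: rtranclp_induct)
    case base then show ?case by simp
  next
    case (step v v')
    have vU: "v \<in> U" "v' \<in> U" using step(1,2) by (auto simp: U_def intro: rtranclp.rtrancl_into_rtrancl)
    have "{v,v'} \<notin> star_edges y B"
    proof
      assume "{v,v'} \<in> star_edges y B"
      then obtain w where "{v,v'} = {y,w}" by (auto simp: star_edges_def)
      then have "v = y \<or> v' = y" by (auto simp: doubleton_eq_iff)
      then show False using vU yU by auto
    qed
    then have "edge_rel (T - star_edges y A - star_edges y B) v v'" using step(2) by (auto simp: edge_rel_def)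
    then show ?case using step(3) by (auto intro: rtranclp.rtrancl_into_rtrancl)
  qed
  show ?thesis using w0(1) inT strong[OF r0] by blast
qed

lemma Phi_in:
  assumes T: "T \<in> spanning_trees F0"
  shows "Phi T \<in> spanning_trees G0"
proof -
  note tp = tree_props[OF T]
  have sub: "T \<subseteq> edges F0" using T by (auto simp: spanning_trees_def)
  have Wn: "\<forall>w\<in>A. w \<noteq> y \<and> w \<noteq> x" "\<forall>w\<in>B. w \<noteq> y \<and> w \<noteq> x" using xS yS by auto
  show ?thesis
  proof (cases "case1 T")
    case True
    have tr: "connected_es (mv T y x A) \<and> acyclic_es (mv T y x A) \<and> proper (mv T y x A)"
      using mv_tree[OF finite tp(1,2,3) xy[symmetric] Wn(1)] True by (simp add: case1_def)
    have "mv T y x A \<subseteq> edges G0"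
    proof
      fix e assume e: "e \<in> mv T y x A"
      show "e \<in> edges G0"
      proof (cases "e \<in> T \<and> \<not> (\<exists>w\<in>A. e = {y,w})")
        case True
        then obtain u v where uv: "e = {u,v}" "H u v \<or> (u = y \<and> v \<in> A \<union> B)" using F0_edge sub by blast
        then have "H u v \<or> (u = y \<and> v \<in> B)" using True by auto
        then show ?thesis using uv(1) unfolding edges_def addE_def by blast
      next
        case False
        then obtain w where "w \<in> A" "e = {x,w}" using e by (auto simp: mv_def)
        then show ?thesis unfolding edges_def addE_def by blast
      qed
    qed
    then show ?thesis using True tr by (simp add: Phi_def spanning_trees_def)
  next
    case False
    obtain w0 where w0: "w0 \<in> A" "{y,w0} \<in> T" "reach (T - star_edges y A - star_edges y B) x w0"
      using case2_w0[OF T False] by blast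
    have "{y,w0} \<notin> star_edges y B" using w0(1) AB by (auto simp: star_edges_def dbl1)
    then have "reach (T - star_edges y B) w0 y" using w0(2) Wn(1) w0(1) by (intro reach_edge) (auto simp: insert_commute)
    moreover have "reach (T - star_edges y B) x w0" using reach_mono[OF _ w0(3)] by blast
    ultimately have rB: "reach (T - star_edges y B) x y" by (meson rtranclp_trans)
    have tr: "connected_es (mv T y x B) \<and> acyclic_es (mv T y x B) \<and> proper (mv T y x B)"
      using mv_tree[OF finite tp(1,2,3) xy[symmetric] Wn(2) rB] .
    have tr2: "connected_es (img \<alpha> (mv T y x B)) \<and> acyclic_es (img \<alpha> (mv T y x B)) \<and> proper (img \<alpha> (mv T y x B))"
      using tree_img[OF bij] tr by blast
    have "mv T y x B \<subseteq> edges F1"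
    proof
      fix e assume e: "e \<in> mv T y x B"
      show "e \<in> edges F1"
      proof (cases "e \<in> T \<and> \<not> (\<exists>w\<in>B. e = {y,w})")
        case True
        then obtain u v where uv: "e = {u,v}" "H u v \<or> (u = y \<and> v \<in> A \<union> B)" using F0_edge sub by blast
        then have "H u v \<or> (u = y \<and> v \<in> A)" using True by auto
        then show ?thesis using uv(1) unfolding edges_def addE_def by blast
      next
        case False
        then obtain w where "w \<in> B" "e = {x,w}" using e by (auto simp: mv_def)
        then show ?thesis unfolding edges_def addE_def by blast
      qed
    qed
    moreover have "img \<alpha> (edges F1) \<subseteq> edges G0"
    proof
      fix e assume "e \<in> img \<alpha> (edges F1)"
      then obtain u v where uv: "e = {\<alpha> u, \<alpha> v}" "F1 u v" by (auto simp: img_def edges_def)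
      have "G0 (\<alpha> u) (\<alpha> v)" using uv(2) unfolding addE_def
        using aut ax ay fixS by auto
      then show "e \<in> edges G0" using uv(1) by (auto simp: edges_def)
    qed
    ultimately have "img \<alpha> (mv T y x B) \<subseteq> edges G0" unfolding img_def by blast
    then show ?thesis using False tr2 by (simp add: Phi_def spanning_trees_def)
  qed
qed

end

context kel begin

lemma disc1:
  assumes T: "T \<in> spanning_trees F0" and c: "case1 T"
  shows "reach (mv T y x A - star_edges x A) x y"
proof -
  have "T - star_edges y A \<subseteq> mv T y x A - star_edges x A"
    using tree_props(4)[OF T] by (auto simp: mv_def star_edges_def)
  then show ?thesis using reach_mono c by (auto simp: case1_def)
qed

lemma disc2:
  assumes T: "T \<in> spanning_trees F0" and nc: "\<not> case1 T"
  shows "\<not> reach (img \<alpha> (mv T y x B) - star_edges x A) x y"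
proof
  assume r: "reach (img \<alpha> (mv T y x B) - star_edges x A) x y"
  note tp = tree_props[OF T]
  obtain w0 where w0: "w0 \<in> A" "{y,w0} \<in> T" "reach (T - star_edges y A - star_edges y B) x w0"
    using case2_w0[OF T nc] by blast
  define T2 where "T2 = mv T y x B"
  define T3 where "T3 = img \<alpha> T2"
  have Wn: "\<forall>w\<in>A. w \<noteq> y \<and> w \<noteq> x" "\<forall>w\<in>B. w \<noteq> y \<and> w \<noteq> x" using xS yS by auto
  have "\<not> (\<exists>w\<in>B. {y,w0} = {y,w})" using w0(1) AB by (auto simp: dbl1)
  then have in2: "{y,w0} \<in> T2" using w0(2) by (auto simp: T2_def mv_def)
  have aw0: "\<alpha> w0 = w0" using fixS w0(1) by auto
  have "\<alpha> ` {y,w0} = {x,w0}" using ay aw0 by simp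
  then have in3: "{x,w0} \<in> T3" using in2 unfolding T3_def img_def by (metis image_eqI)
  have F0T: "T \<in> spanning_trees F0" by (rule T)
  have rB: "reach (T - star_edges y B) x y"
  proof -
    have "{y,w0} \<notin> star_edges y B" using w0(1) AB by (auto simp: star_edges_def dbl1)
    then have "reach (T - star_edges y B) w0 y" using w0(2) Wn(1) w0(1) by (intro reach_edge) (auto simp: insert_commute)
    moreover have "reach (T - star_edges y B) x w0" by (rule reach_mono[OF _ w0(3)]) blast
    ultimately show ?thesis by (meson rtranclp_trans)
  qed
  have tr: "connected_es T2 \<and> acyclic_es T2 \<and> proper T2"
    unfolding T2_def using mv_tree[OF finite tp(1,2,3) xy[symmetric] Wn(2) rB] .
  have acy3: "acyclic_es T3" unfolding T3_def using tree_img[OF bij] tr by blast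
  have "T - star_edges y A - star_edges y B \<subseteq> T2 - star_edges y A"
    by (auto simp: T2_def mv_def star_edges_def)
  then have "reach (T2 - star_edges y A) x w0" using w0(3) by (rule reach_mono)
  from reach_img[OF inj_alpha this] have r1: "reach (img \<alpha> (T2 - star_edges y A)) y w0"
    by (simp add: ax aw0)
  have "img \<alpha> (T2 - star_edges y A) \<subseteq> T3 - star_edges x A"
  proof
    fix e' assume "e' \<in> img \<alpha> (T2 - star_edges y A)"
    then obtain e where e: "e \<in> T2" "e \<notin> star_edges y A" "e' = \<alpha> ` e" by (auto simp: img_def)
    have "e' \<in> T3" using e unfolding T3_def img_def by blast
    moreover have "e' \<notin> star_edges x A"
    proof
      assume "e' \<in> star_edges x A"
      then obtain w where w: "w \<in> A" "e' = {x,w}" by (auto simp: star_edges_def)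
      have "\<alpha> ` {y,w} = {x,w}" using ay fixS w(1) by simp
      then have "\<alpha> ` e = \<alpha> ` {y,w}" using e(3) w(2) by simp
      then have "e = {y,w}" by (simp only: inj_image_eq_iff[OF inj_alpha])
      then show False using e(2) w(1) by (auto simp: star_edges_def)
    qed
    ultimately show "e' \<in> T3 - star_edges x A" by blast
  qed
  then have r2: "reach (T3 - star_edges x A) y w0" using r1 by (rule reach_mono)
  have "reach (T3 - star_edges x A) x w0" using r[folded T2_def, folded T3_def] r2 by (meson rtranclp_trans)
  moreover have "T3 - star_edges x A \<subseteq> T3 - {{x,w0}}" using w0(1) by (auto simp: star_edges_def)
  ultimately have "reach (T3 - {{x,w0}}) x w0" by (rule reach_mono[rotated])
  then show False using acyclicD[OF acy3 in3] by simp
qed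

lemma Phi_inj: "inj_on Phi (spanning_trees F0)"
proof (rule inj_onI)
  fix T1 T2 assume T1: "T1 \<in> spanning_trees F0" and T2: "T2 \<in> spanning_trees F0" and eq: "Phi T1 = Phi T2"
  have Wn: "\<forall>w\<in>A. w \<noteq> y \<and> w \<noteq> x" "\<forall>w\<in>B. w \<noteq> y \<and> w \<noteq> x" using xS yS by auto
  have nx1: "\<forall>w\<in>A. {x,w} \<notin> T1" "\<forall>w\<in>B. {x,w} \<notin> T1" using tree_props(4)[OF T1] by auto
  have nx2: "\<forall>w\<in>A. {x,w} \<notin> T2" "\<forall>w\<in>B. {x,w} \<notin> T2" using tree_props(4)[OF T2] by auto
  show "T1 = T2"
  proof (cases "case1 T1")
    case c1: True
    show ?thesis
    proof (cases "case1 T2")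
      case True
      then have "mv T1 y x A = mv T2 y x A" using eq c1 by (simp add: Phi_def)
      then show ?thesis using mv_inv[OF xy[symmetric] Wn(1) nx1(1)] mv_inv[OF xy[symmetric] Wn(1) nx2(1)] by metis
    next
      case False
      have "reach (Phi T1 - star_edges x A) x y" using disc1[OF T1 c1] c1 by (simp add: Phi_def)
      moreover have "\<not> reach (Phi T2 - star_edges x A) x y" using disc2[OF T2 False] False by (simp add: Phi_def)
      ultimately show ?thesis using eq by simp
    qed
  next
    case c1: False
    show ?thesis
    proof (cases "case1 T2")
      case True
      have "reach (Phi T2 - star_edges x A) x y" using disc1[OF T2 True] True by (simp add: Phi_def)
      moreover have "\<not> reach (Phi T1 - star_edges x A) x y" using disc2[OF T1 c1] c1 by (simp add: Phi_def)
      ultimately show ?thesis using eq by simp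
    next
      case False
      then have "img \<alpha> (mv T1 y x B) = img \<alpha> (mv T2 y x B)" using eq c1 by (simp add: Phi_def)
      then have "mv T1 y x B = mv T2 y x B" using inj_img[OF inj_alpha] by (simp add: inj_eq)
      then show ?thesis using mv_inv[OF xy[symmetric] Wn(2) nx1(2)] mv_inv[OF xy[symmetric] Wn(2) nx2(2)] by metis
    qed
  qed
qed

theorem trees_le: "num_spanning_trees F0 \<le> num_spanning_trees G0"
  unfolding num_spanning_trees_def
  by (rule card_inj_on_le[OF Phi_inj]) (auto intro: Phi_in finite_spanning_trees)

end

lemma det_remove_rows:
  fixes A :: "real^'n::finite^'n"
  assumes "finite J" "k \<notin> J"
  shows "det (\<chi> i. if i = k then v else if i \<in> J then A$i + c i *s v else A$i)
       = det (\<chi> i. if i = k then v else A$i)"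
  using assms
proof (induction J rule: finite_induct)
  case empty then show ?case by (intro arg_cong[where f=det]) (simp add: vec_eq_iff)
next
  case (insert j J)
  let ?X = "(\<chi> i. if i = k then v else if i \<in> J then A$i + c i *s v else A$i) :: real^'n^'n"
  have jk: "j \<noteq> k" using insert by auto
  have "(\<chi> i. if i = k then v else if i \<in> insert j J then A$i + c i *s v else A$i)
        = (\<chi> m. if m = j then row j ?X + c j *s row k ?X else row m ?X)"
    using jk insert(2) by (auto simp: vec_eq_iff row_def)
  then have "det (\<chi> i. if i = k then v else if i \<in> insert j J then A$i + c i *s v else A$i) = det ?X"
    using det_row_operation[OF jk, of ?X "c j"] by simp
  then show ?case using insert by simp
qed

lemma det_expand_rows:
  fixes A :: "real^'n::finite^'n"
  assumes "finite I"
  shows "det (\<chi> i. if i \<in> I then A$i + w$i *s v else A$i)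
       = det A + (\<Sum>i\<in>I. w$i * det (\<chi> m. if m = i then v else A$m))"
  using assms
proof (induction I rule: finite_induct)
  case empty
  have "(\<chi> i. A$i) = A" by (simp add: vec_eq_iff)
  then show ?case by simp
next
  case (insert k I)
  let ?R = "\<lambda>i. if i \<in> I then A$i + w$i *s v else A$i"
  have e1: "(\<chi> i. if i \<in> insert k I then A$i + w$i *s v else A$i)
       = (\<chi> i. if i = k then A$k + w$k *s v else ?R i)" by (auto simp: vec_eq_iff)
  have "det (\<chi> i. if i = k then A$k + w$k *s v else ?R i)
      = det (\<chi> i. if i = k then A$k else ?R i) + det (\<chi> i. if i = k then w$k *s v else ?R i)"
    using det_row_add[where a="\<lambda>i. A$k" and k=k and b="\<lambda>i. w$k *s v" and c= ?R] by simp
  also have "(\<chi> i. if i = k then A$k else ?R i) = (\<chi> i. ?R i)" using insert(2) by (auto simp: vec_eq_iff)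
  also have "det (\<chi> i. if i = k then w$k *s v else ?R i) = w$k * det (\<chi> i. if i = k then v else ?R i)"
    using det_row_mul[where k=k and c="w$k" and a="\<lambda>i. v" and b= ?R] by simp
  also have "det (\<chi> i. if i = k then v else ?R i) = det (\<chi> i. if i = k then v else A$i)"
    using det_remove_rows[OF insert(1,2)] by simp
  finally show ?case using insert e1 by (simp add: algebra_simps)
qed

lemma det_replace_row:
  fixes A Q :: "real^'n::finite^'n"
  assumes "Q ** A = mat 1"
  shows "det (\<chi> m. if m = i then v else A$m) = (v v* Q)$i * det A"
proof -
  have "(\<Sum>m\<in>UNIV. (v v* Q)$m *s row m A) = (v v* Q) v* A"
    by (simp add: vec_eq_iff vector_matrix_mult_def row_def sum_component)
  also have "\<dots> = v" by (simp add: vector_matrix_mul_assoc assms)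
  finally have "(\<chi> m. if m = i then v else A$m) = (\<chi> m. if m = i then (\<Sum>m\<in>UNIV. (v v* Q)$m *s row m A) else row m A)"
    by (simp add: row_def vec_eq_iff)
  then show ?thesis using cramer_lemma_transpose[of i "v v* Q" A] by simp
qed

lemma det_rank1:
  fixes A Q :: "real^'n::finite^'n"
  assumes "Q ** A = mat 1"
  shows "det (\<chi> i j. A$i$j + w$i * v$j) = det A * (1 + (\<Sum>i\<in>UNIV. w$i * (v v* Q)$i))"
proof -
  have "(\<chi> i j. A$i$j + w$i * v$j) = (\<chi> i. if i \<in> UNIV then A$i + w$i *s v else A$i)"
    by (simp add: vec_eq_iff)
  then have "det (\<chi> i j. A$i$j + w$i * v$j) = det A + (\<Sum>i\<in>UNIV. w$i * det (\<chi> m. if m = i then v else A$m))"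
    using det_expand_rows[of UNIV A w v] by simp
  also have "\<dots> = det A * (1 + (\<Sum>i\<in>UNIV. w$i * (v v* Q)$i))"
    using det_replace_row[OF assms] by (simp add: algebra_simps sum_distrib_left)
  finally show ?thesis .
qed

definition outer :: "real^'n::finite \<Rightarrow> real^'n \<Rightarrow> real^'n^'n" where
  "outer a b = (\<chi> i j. a$i * b$j)"

definition dotv :: "real^'n::finite \<Rightarrow> real^'n \<Rightarrow> real" where
  "dotv a b = (\<Sum>i\<in>UNIV. a$i * b$i)"

lemma det_rank1':
  fixes A Q :: "real^'n::finite^'n"
  assumes "Q ** A = mat 1"
  shows "det (A + outer w v) = det A * (1 + dotv w (v v* Q))"
proof -
  have "A + outer w v = (\<chi> i j. A$i$j + w$i * v$j)" by (simp add: outer_def vec_eq_iff)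
  then show ?thesis using det_rank1[OF assms, of w v] by (simp add: dotv_def)
qed

lemma outer_mult_left: "outer a b ** C = outer a (b v* C)"
  by (simp add: outer_def matrix_matrix_mult_def vector_matrix_mult_def vec_eq_iff sum_distrib_left mult.assoc)

lemma outer_mult_right: "C ** outer a b = outer (C *v a) b"
  by (simp add: outer_def matrix_matrix_mult_def matrix_vector_mult_def vec_eq_iff sum_distrib_right mult.assoc)

lemma outer_outer: "outer a b ** outer c e = dotv b c *\<^sub>R outer a e"
  by (simp add: outer_def matrix_matrix_mult_def dotv_def vec_eq_iff sum_distrib_left sum_distrib_right algebra_simps)

lemma dotv_vm: "dotv (v v* Q) d = dotv v (Q *v d)"
  unfolding dotv_def vector_matrix_mult_def matrix_vector_mult_def
  by (simp add: sum_distrib_left sum_distrib_right mult.assoc mult.left_commute) (rule sum.swap)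

lemma dotv_comm: "dotv a b = dotv b a" by (simp add: dotv_def mult.commute)

lemma mm_add_r: "((A::real^'n::finite^'m) + B) ** (C::real^'k^'n) = A ** C + B ** C"
  by (vector matrix_matrix_mult_def sum.distrib[symmetric] field_simps)
lemma mm_diff_r: "((A::real^'n::finite^'m) - B) ** (C::real^'k^'n) = A ** C - B ** C"
  by (vector matrix_matrix_mult_def sum_subtractf[symmetric] field_simps)

lemma vm_outer: "v v* outer a b = dotv v a *\<^sub>R b"
  by (simp add: outer_def vector_matrix_mult_def dotv_def vec_eq_iff sum_distrib_right mult.assoc)
lemma vm_diff: "v v* ((A::real^'n::finite^'m) - B) = v v* A - v v* B"
  by (simp add: vector_matrix_mult_def vec_eq_iff sum_subtractf algebra_simps)

lemma det_rank2:
  fixes M Q :: "real^'n::finite^'n"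
  assumes QM: "Q ** M = mat 1" and zd: "dotv d (z v* Q) = 0" and dz: "dotv z (d v* Q) = 0"
  shows "det (M + outer d z + outer z d) = det M * (1 - dotv d (d v* Q) * dotv z (z v* Q))"
proof -
  define M1 where "M1 = M + outer d z"
  define Q1 where "Q1 = Q - outer (Q *v d) (z v* Q)"
  have dM1: "det M1 = det M" using det_rank1'[OF QM, of d z] zd by (simp add: M1_def)
  have zQM: "(z v* Q) v* M = z" by (simp add: vector_matrix_mul_assoc QM)
  have zQd: "dotv (z v* Q) d = 0" using zd by (simp add: dotv_comm)
  have "Q1 ** M1 = Q ** M + Q ** outer d z - outer (Q *v d) (z v* Q) ** M - outer (Q *v d) (z v* Q) ** outer d z"
    by (simp add: Q1_def M1_def matrix_add_ldistrib mm_add_r mm_diff_r algebra_simps)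
  also have "\<dots> = mat 1"
  proof -
    have "outer (Q *v d) (z v* Q) ** outer d z = 0" by (simp add: outer_outer zQd)
    moreover have "outer (Q *v d) (z v* Q) ** M = outer (Q *v d) z" by (simp add: outer_mult_left zQM)
    moreover have "Q ** outer d z = outer (Q *v d) z" by (simp add: outer_mult_right)
    ultimately show ?thesis using QM by simp
  qed
  finally have Q1M1: "Q1 ** M1 = mat 1" .
  have "det (M1 + outer z d) = det M1 * (1 + dotv z (d v* Q1))" using det_rank1'[OF Q1M1] .
  moreover have "d v* Q1 = d v* Q - dotv d (Q *v d) *\<^sub>R (z v* Q)"
    by (simp add: Q1_def vm_diff vm_outer)
  moreover have "dotv d (Q *v d) = dotv d (d v* Q)"
    using dotv_vm[of d Q d] by (simp add: dotv_comm)
  ultimately have e: "det (M1 + outer z d) = det M * (1 + dotv z (d v* Q - dotv d (d v* Q) *\<^sub>R (z v* Q)))"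
    using dM1 by simp
  have "dotv z (d v* Q - dotv d (d v* Q) *\<^sub>R (z v* Q)) = dotv z (d v* Q) - dotv d (d v* Q) * dotv z (z v* Q)"
    by (simp add: dotv_def sum_subtractf sum_distrib_left algebra_simps)
  with e have "det (M1 + outer z d) = det M * (1 + dotv z (d v* Q) - dotv d (d v* Q) * dotv z (z v* Q))"
    by simp
  then show ?thesis using dz by (simp add: M1_def)
qed

definition wN :: "real \<Rightarrow> real \<Rightarrow> ('n::finite \<Rightarrow> 'n \<Rightarrow> real) \<Rightarrow> real^'n^'n" where
  "wN t \<beta> c = (\<chi> i j. (if i = j then t + (\<Sum>k\<in>UNIV. c i k) else 0) + \<beta> - c i j)"

definition goodw :: "('n \<Rightarrow> 'n \<Rightarrow> real) \<Rightarrow> bool" where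
  "goodw c \<longleftrightarrow> (\<forall>i j. c i j = c j i) \<and> (\<forall>i j. 0 \<le> c i j)"

lemma wN_mv: "(wN t \<beta> c *v u)$i = t * u$i + (\<Sum>k\<in>UNIV. c i k * (u$i - u$k)) + \<beta> * (\<Sum>j\<in>UNIV. u$j)"
proof -
  let ?T = "t + (\<Sum>k\<in>UNIV. c i k)"
  have "(wN t \<beta> c *v u)$i = (\<Sum>j\<in>UNIV. (if i = j then ?T * u$j else 0) + \<beta> * u$j - c i j * u$j)"
    by (auto simp: wN_def matrix_vector_mult_def algebra_simps intro!: sum.cong)
  also have "\<dots> = (\<Sum>j\<in>UNIV. (if i = j then ?T * u$j else 0)) + \<beta> * (\<Sum>j\<in>UNIV. u$j) - (\<Sum>j\<in>UNIV. c i j * u$j)"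
    by (simp add: sum.distrib sum_subtractf sum_distrib_left)
  also have "(\<Sum>j\<in>UNIV. (if i = j then ?T * u$j else 0)) = ?T * u$i"
    by (simp add: sum.delta)
  also have "?T * u$i + \<beta> * (\<Sum>j\<in>UNIV. u$j) - (\<Sum>j\<in>UNIV. c i j * u$j) = t * u$i + (\<Sum>k\<in>UNIV. c i k * (u$i - u$k)) + \<beta> * (\<Sum>j\<in>UNIV. u$j)"
    by (simp add: algebra_simps sum_subtractf sum_distrib_left sum_distrib_right)
  finally show ?thesis .
qed

lemma sum_lap_zero:
  assumes "\<forall>i j. c i j = c j i"
  shows "(\<Sum>i\<in>UNIV. \<Sum>k\<in>UNIV. c i k * (u$i - u$k)) = (0::real)"
proof -
  have "(\<Sum>i\<in>UNIV. \<Sum>k\<in>UNIV. c i k * u$k) = (\<Sum>k\<in>UNIV. \<Sum>i\<in>UNIV. c i k * u$k)" by (rule sum.swap)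
  also have "\<dots> = (\<Sum>i\<in>UNIV. \<Sum>k\<in>UNIV. c i k * u$i)" using assms by (metis (no_types, lifting) sum.cong)
  finally show ?thesis by (simp add: algebra_simps sum_subtractf)
qed

lemma wN_sum:
  fixes c :: "'n::finite \<Rightarrow> 'n \<Rightarrow> real"
  assumes "goodw c"
  shows "(\<Sum>i\<in>UNIV. (wN t \<beta> c *v u)$i) = (t + \<beta> * real CARD('n)) * (\<Sum>i\<in>UNIV. u$i)"
proof -
  have "(\<Sum>i\<in>UNIV. (wN t \<beta> c *v u)$i) = t * (\<Sum>i\<in>UNIV. u$i) + (\<Sum>i\<in>UNIV. \<Sum>k\<in>UNIV. c i k * (u$i - u$k)) + real CARD('n) * (\<beta> * (\<Sum>j\<in>UNIV. u$j))"
    by (simp add: wN_mv sum.distrib sum_distrib_left)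
  also have "\<dots> = (t + \<beta> * real CARD('n)) * (\<Sum>i\<in>UNIV. u$i)"
    using sum_lap_zero[of c u] assms by (simp add: goodw_def algebra_simps)
  finally show ?thesis .
qed

lemma exists_max: "\<exists>m. \<forall>v. (u::real^'n::finite)$v \<le> u$m"
proof -
  have "Max (range (\<lambda>v. u$v)) \<in> range (\<lambda>v. u$v)" by (rule Max_in) auto
  then obtain m where "Max (range (\<lambda>v. u$v)) = u$m" by blast
  then show ?thesis by (metis Max_ge finite rangeI finite_imageI)
qed

lemma maxp:
  assumes g: "goodw c" and t: "t > 0"
    and eq: "\<And>i. t * u$i + (\<Sum>k\<in>UNIV. c i k * (u$i - u$k)) = f i"
  shows "\<exists>m. (\<forall>v. u$v \<le> u$m) \<and> t * u$m \<le> f m"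
proof -
  obtain m where m: "\<forall>v. u$v \<le> u$m" using exists_max by blast
  have "0 \<le> (\<Sum>k\<in>UNIV. c m k * (u$m - u$k))"
    using g m by (intro sum_nonneg) (auto simp: goodw_def)
  then show ?thesis using eq[of m] m by (intro exI[of _ m]) auto
qed

lemma minp:
  assumes g: "goodw c" and t: "t > 0"
    and eq: "\<And>i. t * u$i + (\<Sum>k\<in>UNIV. c i k * (u$i - u$k)) = f i"
  shows "\<exists>m. (\<forall>v. u$m \<le> u$v) \<and> f m \<le> t * u$m"
proof -
  have "t * (-u)$i + (\<Sum>k\<in>UNIV. c i k * ((-u)$i - (-u)$k)) = - f i" for i
  proof -
    have "(\<Sum>k\<in>UNIV. c i k * ((-u)$i - (-u)$k)) = - (\<Sum>k\<in>UNIV. c i k * (u$i - u$k))"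
      by (simp add: sum_negf[symmetric] algebra_simps)
    then show ?thesis using eq[of i] by simp
  qed
  from maxp[OF g t this] obtain m where "\<forall>v. (-u)$v \<le> (-u)$m" "t * (-u)$m \<le> - f m" by blast
  then show ?thesis by (intro exI[of _ m]) auto
qed

lemma wN_eq:
  fixes c :: "'n::finite \<Rightarrow> 'n \<Rightarrow> real"
  assumes g: "goodw c" and t: "t > 0" and b: "\<beta> \<ge> 0" and Mu: "wN t \<beta> c *v u = f" and sf: "(\<Sum>i\<in>UNIV. f$i) = 0"
  shows "(\<Sum>i\<in>UNIV. u$i) = 0" "\<And>i. t * u$i + (\<Sum>k\<in>UNIV. c i k * (u$i - u$k)) = f$i"
proof -
  have "(t + \<beta> * real CARD('n)) * (\<Sum>i\<in>UNIV. u$i) = 0" using wN_sum[OF g, of t \<beta> u] Mu sf by simp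
  moreover have "t + \<beta> * real CARD('n) > 0" using t b by (simp add: add_pos_nonneg)
  ultimately show s0: "(\<Sum>i\<in>UNIV. u$i) = 0" by simp
  fix i show "t * u$i + (\<Sum>k\<in>UNIV. c i k * (u$i - u$k)) = f$i" using wN_mv[of t \<beta> c u i] Mu s0 by simp
qed

lemma wN_ker:
  assumes g: "goodw c" and t: "t > 0" and b: "\<beta> \<ge> 0" and Mu: "wN t \<beta> c *v u = 0"
  shows "u = 0"
proof -
  have e: "\<And>i. t * u$i + (\<Sum>k\<in>UNIV. c i k * (u$i - u$k)) = 0$i" using wN_eq[OF g t b Mu] by simp
  obtain m where m: "\<forall>v. u$v \<le> u$m" "t * u$m \<le> 0" using maxp[OF g t e] by auto
  obtain m' where m': "\<forall>v. u$m' \<le> u$v" "0 \<le> t * u$m'" using minp[OF g t e] by auto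
  have "u$m \<le> 0" "u$m' \<ge> 0" using m(2) m'(2) t by (auto simp: mult_le_0_iff zero_le_mult_iff)
  then show ?thesis using m(1) m'(1) by (metis order.antisym order.trans vec_eq_iff zero_index)
qed

lemma wN_inverse:
  assumes g: "goodw c" and t: "t > 0" and b: "\<beta> \<ge> 0"
  shows "\<exists>Q. Q ** wN t \<beta> c = mat 1 \<and> wN t \<beta> c ** Q = mat 1" "det (wN t \<beta> c) \<noteq> 0"
proof -
  have "\<exists>B. B ** wN t \<beta> c = mat 1" unfolding matrix_left_invertible_ker using wN_ker[OF g t b] by blast
  then have inv: "invertible (wN t \<beta> c)" by (simp add: invertible_left_inverse)
  then show "\<exists>Q. Q ** wN t \<beta> c = mat 1 \<and> wN t \<beta> c ** Q = mat 1" by (auto simp: invertible_def)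
  show "det (wN t \<beta> c) \<noteq> 0" using inv by (simp add: invertible_det_nz)
qed

lemma cont_if_const[continuous_intros]:
  "continuous_on S f \<Longrightarrow> continuous_on S g \<Longrightarrow> continuous_on S (\<lambda>x. if P then f x else g x)"
  by (cases P) auto

lemma wN_det_pos:
  fixes c :: "'n::finite \<Rightarrow> 'n \<Rightarrow> real"
  assumes g: "goodw c" and t: "t > 0"
  shows "det (wN t 1 c) > 0"
proof (rule ccontr)
  assume "\<not> det (wN t 1 c) > 0"
  then have le: "det (wN t 1 c) \<le> 0" by simp
  define f where "f s = det (wN t s (\<lambda>i j. s * c i j))" for s
  have f0: "f 0 = t ^ CARD('n)"
  proof -
    have "f 0 = prod (\<lambda>i. (wN t 0 (\<lambda>i j. 0 * c i j) :: real^'n^'n)$i$i) UNIV"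
      unfolding f_def by (rule det_diagonal) (simp add: wN_def)
    then show ?thesis by (simp add: wN_def)
  qed
  have f1: "f 1 = det (wN t 1 c)" by (simp add: f_def)
  have cont: "continuous_on {0..1} f"
    unfolding f_def det_def wN_def by (simp, intro continuous_intros)
  have "f 1 \<le> 0" "0 \<le> f 0" using le f1 f0 t by auto
  from IVT2'[OF this _ cont] obtain s where s: "0 \<le> s" "s \<le> 1" "f s = 0" by auto
  have gs: "goodw (\<lambda>i j. s * c i j)" using g s(1) by (auto simp: goodw_def)
  show False using wN_inverse(2)[OF gs t s(1)] s(3) by (simp add: f_def)
qed

lemma wN_perturb:
  fixes c c' :: "'n::finite \<Rightarrow> 'n \<Rightarrow> real"
  assumes "\<And>i j. c' i j - c i j = (if i = j then 0 else -(d$i * z$j + z$i * d$j))"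
    and "(\<Sum>i\<in>UNIV. d$i) = 0" and "(\<Sum>i\<in>UNIV. z$i) = 0"
  shows "wN t \<beta> c' = wN t \<beta> c + outer d z + outer z d"
proof -
  have rs: "(\<Sum>k\<in>UNIV. c' i k) = (\<Sum>k\<in>UNIV. c i k) + 2 * d$i * z$i" for i
  proof -
    let ?g = "\<lambda>k. -(d$i * z$k + z$i * d$k)"
    have "(\<Sum>k\<in>UNIV. c' i k) - (\<Sum>k\<in>UNIV. c i k) = (\<Sum>k\<in>UNIV. c' i k - c i k)" by (simp add: sum_subtractf)
    also have "\<dots> = (\<Sum>k\<in>UNIV. ?g k - (if i = k then ?g k else 0))"
      using assms(1) by (intro sum.cong) auto
    also have "\<dots> = (\<Sum>k\<in>UNIV. ?g k) - ?g i"
      by (simp add: sum_subtractf sum.delta)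
    also have "(\<Sum>k\<in>UNIV. ?g k) = (\<Sum>k\<in>UNIV. -(d$i * z$k)) + (\<Sum>k\<in>UNIV. -(z$i * d$k))"
      by (simp add: sum.distrib[symmetric])
    also have "\<dots> = -(d$i * (\<Sum>k\<in>UNIV. z$k) + z$i * (\<Sum>k\<in>UNIV. d$k))"
      by (simp only: sum_negf sum_distrib_left[symmetric])
    finally show ?thesis using assms(2,3) by simp
  qed
  have "wN t \<beta> c' $ i $ j = (wN t \<beta> c + outer d z + outer z d) $ i $ j" for i j
  proof (cases "i = j")
    case True
    then show ?thesis using rs[of i] assms(1)[of i i] by (simp add: wN_def outer_def algebra_simps)
  next
    case False
    then show ?thesis using assms(1)[of i j] by (simp add: wN_def outer_def algebra_simps)
  qed
  then show ?thesis by (simp add: vec_eq_iff)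
qed

definition indf :: "('a \<Rightarrow> 'a \<Rightarrow> bool) \<Rightarrow> 'a \<Rightarrow> 'a \<Rightarrow> real" where
  "indf E i j = (if E i j then 1 else 0)"

lemma sum_ind_card: "(\<Sum>i\<in>(UNIV::'a::finite set). (if i \<in> P then 1 else 0::real)) = real (card P)"
  by (simp add: sum.If_cases)

context kel begin

definition cs :: "'a \<Rightarrow> 'a \<Rightarrow> real" where
  "cs i j = indf H i j + (if ((i = x \<or> i = y) \<and> j \<in> A \<union> B) \<or> ((j = x \<or> j = y) \<and> i \<in> A \<union> B) then 1/2 else 0)"
definition dv :: "real^'a" where "dv = (\<chi> i. (if i = y then 1 else 0) - (if i = x then 1 else 0))"
definition pv :: "real^'a" where "pv = (\<chi> i. ((if i = x then 1 else 0) + (if i = y then 1 else 0)) / 2)"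
definition fv :: "'a set \<Rightarrow> real^'a" where "fv P = (\<chi> i. real (card P) * pv$i - (if i \<in> P then 1 else 0))"
definition zG :: "real^'a" where "zG = (1/2) *\<^sub>R (fv B - fv A)"
definition zF :: "real^'a" where "zF = (1/2) *\<^sub>R (fv A + fv B)"

lemma dv_comp: "dv$i = (if i = y then 1 else if i = x then -1 else 0)"
  using xy by (auto simp: dv_def)

lemma fv_comp: "P \<subseteq> A \<union> B \<Longrightarrow> fv P $ i = (if i = x \<or> i = y then real (card P) / 2 else - (if i \<in> P then 1 else 0))"
  using xy xS yS by (auto simp: fv_def pv_def)

lemma zG_comp: "zG$i = (if i = x \<or> i = y then (real (card B) - real (card A)) / 4
   else ((if i \<in> A then 1 else 0) - (if i \<in> B then 1 else 0)) / 2)"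
  by (simp add: zG_def fv_comp)

lemma zF_comp: "zF$i = (if i = x \<or> i = y then (real (card A) + real (card B)) / 4
   else - ((if i \<in> A then 1 else 0) + (if i \<in> B then 1 else 0)) / 2)"
  by (simp add: zF_def fv_comp)

lemma Hx: "w \<in> A \<union> B \<Longrightarrow> \<not> H w x" "w \<in> A \<union> B \<Longrightarrow> \<not> H w y"
  using noHx noHy Hsym by blast+

lemma deltaG: "indf G0 i j - cs i j = (if i = j then 0 else -(dv$i * zG$j + zG$i * dv$j))"
  using xy xS yS AB Hx noHx noHy Hirr
  by (auto simp: indf_def cs_def addE_def dv_comp zG_comp field_simps)

lemma deltaF: "indf F0 i j - cs i j = (if i = j then 0 else -(dv$i * zF$j + zF$i * dv$j))"
  using xy xS yS AB Hx noHx noHy Hirr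
  by (auto simp: indf_def cs_def addE_def dv_comp zF_comp field_simps)

lemma sum_pv: "(\<Sum>i\<in>UNIV. pv$i) = 1"
  using xy by (simp add: pv_def sum_divide_distrib[symmetric] sum.distrib)

lemma sum_dv: "(\<Sum>i\<in>UNIV. dv$i) = 0"
  by (simp add: dv_def sum_subtractf)

lemma sum_fv: "(\<Sum>i\<in>UNIV. fv P $ i) = 0"
  by (simp add: fv_def sum_subtractf sum_distrib_left[symmetric] sum_pv sum_ind_card)

lemma sum_zG: "(\<Sum>i\<in>UNIV. zG$i) = 0"
  by (simp add: zG_def sum_divide_distrib[symmetric] sum_subtractf sum_fv)

lemma sum_zF: "(\<Sum>i\<in>UNIV. zF$i) = 0"
  by (simp add: zF_def sum_divide_distrib[symmetric] sum.distrib sum_fv)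

lemma NG_eq: "wN t \<beta> (indf G0) = wN t \<beta> cs + outer dv zG + outer zG dv"
  by (rule wN_perturb[OF deltaG sum_dv sum_zG])

lemma NF_eq: "wN t \<beta> (indf F0) = wN t \<beta> cs + outer dv zF + outer zF dv"
  by (rule wN_perturb[OF deltaF sum_dv sum_zF])

lemma good_cs: "goodw cs"
  using Hsym by (auto simp: goodw_def cs_def indf_def)

end

lemma dotv_add_l: "dotv (a + b) c = dotv a c + dotv b c" by (simp add: dotv_def sum.distrib algebra_simps)
lemma dotv_add_r: "dotv c (a + b) = dotv c a + dotv c b" by (simp add: dotv_def sum.distrib algebra_simps)
lemma dotv_diff_l: "dotv (a - b) c = dotv a c - dotv b c" by (simp add: dotv_def sum_subtractf algebra_simps)
lemma dotv_diff_r: "dotv c (a - b) = dotv c a - dotv c b" by (simp add: dotv_def sum_subtractf algebra_simps)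
lemma dotv_scale_l: "dotv (r *\<^sub>R a) c = r * dotv a c" by (simp add: dotv_def sum_distrib_left algebra_simps)
lemma dotv_scale_r: "dotv c (r *\<^sub>R a) = r * dotv c a" by (simp add: dotv_def sum_distrib_left algebra_simps)
lemmas dotv_lin = dotv_add_l dotv_add_r dotv_diff_l dotv_diff_r dotv_scale_l dotv_scale_r

lemma mv_lin: "Q *v (a + b) = Q *v a + Q *v (b::real^'n::finite)" "Q *v (a - b) = Q *v a - Q *v b"
  "Q *v (r *\<^sub>R a) = r *\<^sub>R (Q *v a)"
  by (simp_all add: vec_eq_iff matrix_vector_mult_def sum_distrib_left sum.distrib sum_subtractf algebra_simps)

lemma all_zero:
  assumes "\<forall>v. (u::real^'n::finite)$v \<le> 0" "(\<Sum>i\<in>UNIV. u$i) = 0"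
  shows "u$v = 0"
proof -
  have "(\<Sum>i\<in>UNIV. - u$i) = 0" using assms(2) by (simp add: sum_negf)
  then have "\<forall>i\<in>UNIV. - u$i = 0" using assms(1) by (subst (asm) sum_nonneg_eq_0_iff) auto
  then show ?thesis by simp
qed

context kel begin

lemma sum_alpha: "(\<Sum>i\<in>UNIV. g (\<alpha> i)) = (\<Sum>i\<in>UNIV. g i)"
  using sum.reindex_bij_betw[of \<alpha> UNIV UNIV g] bij by (simp add: bij_def)

lemma alpha_x_iff: "\<alpha> i = x \<longleftrightarrow> i = y" "\<alpha> i = y \<longleftrightarrow> i = x"
  using ax ay inj_alpha by (metis injD)+

lemma alpha_S_iff: "\<alpha> i \<in> A \<longleftrightarrow> i \<in> A" "\<alpha> i \<in> B \<longleftrightarrow> i \<in> B"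
proof -
  have "\<alpha> i \<in> A \<union> B \<Longrightarrow> \<alpha> i = i" using fixS[of "\<alpha> i"] inj_alpha by (metis injD)
  then show "\<alpha> i \<in> A \<longleftrightarrow> i \<in> A" "\<alpha> i \<in> B \<longleftrightarrow> i \<in> B" using fixS by (metis Un_iff)+
qed

lemma cs_inv: "cs (\<alpha> i) (\<alpha> j) = cs i j"
  using aut[of i j] alpha_x_iff alpha_S_iff by (auto simp: cs_def indf_def)

lemma M_inv: "wN t \<beta> cs $ (\<alpha> i) $ (\<alpha> j) = wN t \<beta> cs $ i $ j"
proof -
  have "(\<Sum>k\<in>UNIV. cs (\<alpha> i) k) = (\<Sum>k\<in>UNIV. cs (\<alpha> i) (\<alpha> k))" by (rule sum_alpha[symmetric])
  also have "\<dots> = (\<Sum>k\<in>UNIV. cs i k)" by (simp add: cs_inv)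
  finally show ?thesis using inj_alpha by (auto simp: wN_def cs_inv inj_eq)
qed

lemma Q_inv:
  assumes QM: "Q ** wN t \<beta> cs = mat 1" and MQ: "wN t \<beta> cs ** Q = mat 1"
  shows "Q $ (\<alpha> i) $ (\<alpha> j) = Q $ i $ j"
proof -
  let ?M = "wN t \<beta> cs"
  define Qa where "Qa = (\<chi> i j. Q $ (\<alpha> i) $ (\<alpha> j))"
  have "(Qa ** ?M) $ i $ j = (mat 1 :: real^'a^'a) $ i $ j" for i j
  proof -
    have "(Qa ** ?M) $ i $ j = (\<Sum>k\<in>UNIV. Q $ (\<alpha> i) $ (\<alpha> k) * ?M $ (\<alpha> k) $ (\<alpha> j))"
      by (simp add: Qa_def matrix_matrix_mult_def M_inv)
    also have "\<dots> = (\<Sum>k\<in>UNIV. Q $ (\<alpha> i) $ k * ?M $ k $ (\<alpha> j))"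
      by (rule sum_alpha[where g="\<lambda>k. Q $ (\<alpha> i) $ k * ?M $ k $ (\<alpha> j)"])
    also have "\<dots> = (Q ** ?M) $ (\<alpha> i) $ (\<alpha> j)" by (simp add: matrix_matrix_mult_def)
    also have "\<dots> = (mat 1 :: real^'a^'a) $ i $ j" using QM inj_alpha by (simp add: mat_def inj_eq)
    finally show ?thesis .
  qed
  then have QaM: "Qa ** ?M = mat 1" by (simp add: vec_eq_iff)
  have "Qa = Qa ** (?M ** Q)" using MQ by simp
  also have "\<dots> = Q" by (simp add: matrix_mul_assoc QaM)
  finally show ?thesis by (simp add: Qa_def vec_eq_iff)
qed

end

context kel begin

lemma Qv_inv:
  assumes QM: "Q ** wN t \<beta> cs = mat 1" and MQ: "wN t \<beta> cs ** Q = mat 1"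
    and v: "\<And>i. v $ (\<alpha> i) = v $ i"
  shows "(Q *v v) $ (\<alpha> i) = (Q *v v) $ i"
proof -
  have "(Q *v v) $ (\<alpha> i) = (\<Sum>j\<in>UNIV. Q $ (\<alpha> i) $ (\<alpha> j) * v $ (\<alpha> j))"
    unfolding matrix_vector_mult_def by (simp add: sum_alpha[where g="\<lambda>j. Q $ (\<alpha> i) $ j * v $ j", symmetric])
  also have "\<dots> = (Q *v v) $ i" by (simp add: Q_inv[OF QM MQ] v matrix_vector_mult_def)
  finally show ?thesis .
qed

lemma sum2_alpha: "(\<Sum>i\<in>UNIV. \<Sum>j\<in>UNIV. f i j) = (\<Sum>i\<in>UNIV. \<Sum>j\<in>UNIV. (f (\<alpha> i) (\<alpha> j) :: real))"
proof -
  have "(\<Sum>i\<in>UNIV. \<Sum>j\<in>UNIV. f (\<alpha> i) (\<alpha> j)) = (\<Sum>i\<in>UNIV. \<Sum>j\<in>UNIV. f (\<alpha> i) j)"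
    by (rule sum.cong[OF refl]) (rule sum_alpha)
  also have "\<dots> = (\<Sum>i\<in>UNIV. \<Sum>j\<in>UNIV. f i j)" by (rule sum_alpha[where g="\<lambda>i. \<Sum>j\<in>UNIV. f i j"])
  finally show ?thesis by simp
qed

lemma dotv_anti:
  assumes QM: "Q ** wN t \<beta> cs = mat 1" and MQ: "wN t \<beta> cs ** Q = mat 1"
    and a: "\<And>i. a $ (\<alpha> i) = - a $ i" and b: "\<And>i. b $ (\<alpha> i) = b $ i"
  shows "dotv a (b v* Q) = 0" "dotv b (a v* Q) = 0"
proof -
  have g: "\<And>i j. Q $ (\<alpha> i) $ (\<alpha> j) = Q $ i $ j" using Q_inv[OF QM MQ] .
  have "dotv a (b v* Q) = (\<Sum>i\<in>UNIV. \<Sum>j\<in>UNIV. a$i * b$j * Q$j$i)"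
    by (simp add: dotv_def vector_matrix_mult_def sum_distrib_left mult.assoc)
  also have "\<dots> = (\<Sum>i\<in>UNIV. \<Sum>j\<in>UNIV. a$(\<alpha> i) * b$(\<alpha> j) * Q$(\<alpha> j)$(\<alpha> i))"
    by (rule sum2_alpha)
  also have "\<dots> = - (\<Sum>i\<in>UNIV. \<Sum>j\<in>UNIV. a$i * b$j * Q$j$i)"
    by (simp add: a b g sum_negf[symmetric])
  finally show "dotv a (b v* Q) = 0" by (simp add: dotv_def vector_matrix_mult_def sum_distrib_left mult.assoc)
  have "dotv b (a v* Q) = (\<Sum>i\<in>UNIV. \<Sum>j\<in>UNIV. b$i * a$j * Q$j$i)"
    by (simp add: dotv_def vector_matrix_mult_def sum_distrib_left mult.assoc)
  also have "\<dots> = (\<Sum>i\<in>UNIV. \<Sum>j\<in>UNIV. b$(\<alpha> i) * a$(\<alpha> j) * Q$(\<alpha> j)$(\<alpha> i))"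
    by (rule sum2_alpha)
  also have "\<dots> = - (\<Sum>i\<in>UNIV. \<Sum>j\<in>UNIV. b$i * a$j * Q$j$i)"
    by (simp add: a b g sum_negf[symmetric])
  finally show "dotv b (a v* Q) = 0" by (simp add: dotv_def vector_matrix_mult_def sum_distrib_left mult.assoc)
qed

end

context kel begin

lemma dv_anti: "dv $ (\<alpha> i) = - dv $ i"
  by (simp add: dv_def alpha_x_iff)

lemma pv_inv: "pv $ (\<alpha> i) = pv $ i"
  by (simp add: pv_def alpha_x_iff add.commute)

lemma fv_inv: "P = A \<or> P = B \<Longrightarrow> fv P $ (\<alpha> i) = fv P $ i"
  by (auto simp: fv_def pv_inv alpha_S_iff)

lemma zG_inv: "zG $ (\<alpha> i) = zG $ i" by (simp add: zG_def fv_inv)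
lemma zF_inv: "zF $ (\<alpha> i) = zF $ i" by (simp add: zF_def fv_inv)

lemma delta_nonneg:
  assumes t: "t > 0" and QM: "Q ** wN t 1 cs = mat 1" and MQ: "wN t 1 cs ** Q = mat 1"
  shows "dotv dv (dv v* Q) \<ge> 0"
proof -
  define u where "u = Q *v dv"
  have Mu: "wN t 1 cs *v u = dv" by (simp add: u_def matrix_vector_mul_assoc MQ)
  note we = wN_eq[OF good_cs t _ Mu sum_dv]
  have eq: "\<And>i. t * u$i + (\<Sum>k\<in>UNIV. cs i k * (u$i - u$k)) = dv$i" using we(2) by simp
  have su: "(\<Sum>i\<in>UNIV. u$i) = 0" using we(1) by simp
  have val: "dotv dv (dv v* Q) = u$y - u$x"
  proof -
    have "dotv dv (dv v* Q) = dotv dv u" unfolding u_def by (metis dotv_comm dotv_vm)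
    also have "\<dots> = (\<Sum>i\<in>UNIV. (if i = y then u$i else 0) - (if i = x then u$i else 0))"
      unfolding dotv_def by (intro sum.cong refl) (simp add: dv_def algebra_simps)
    also have "\<dots> = u$y - u$x" by (simp add: sum_subtractf sum.delta')
    finally show ?thesis .
  qed
  obtain m where m: "\<forall>v. u$v \<le> u$m" "t * u$m \<le> dv$m" using maxp[OF good_cs t eq] by blast
  obtain m' where m': "\<forall>v. u$m' \<le> u$v" "dv$m' \<le> t * u$m'" using minp[OF good_cs t eq] by blast
  show ?thesis
  proof (cases "m = y \<and> m' = x")
    case True
    then show ?thesis using val m(1) by auto
  next
    case False
    then have "m \<noteq> y \<or> m' \<noteq> x" by auto
    then have "u = 0"
    proof
      assume "m \<noteq> y"
      then have "dv$m \<le> 0" by (simp add: dv_comp)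
      then have "u$m \<le> 0" using m(2) t by (smt (verit) mult_pos_pos)
      then have "\<forall>v. u$v \<le> 0" using m(1) by (meson order.trans)
      then show "u = 0" using all_zero[OF _ su] by (simp add: vec_eq_iff)
    next
      assume "m' \<noteq> x"
      then have "dv$m' \<ge> 0" by (simp add: dv_comp)
      then have "u$m' \<ge> 0" using m'(2) t by (smt (verit) mult_pos_neg)
      then have "\<forall>v. (-u)$v \<le> 0" using m'(1) by (simp, meson order.trans)
      moreover have "(\<Sum>i\<in>UNIV. (-u)$i) = 0" using su by (simp add: sum_negf)
      ultimately have "\<And>v. (-u)$v = 0" by (rule all_zero)
      then show "u = 0" by (simp add: vec_eq_iff)
    qed
    then show ?thesis using val by simp
  qed
qed

lemma zeta_part:
  assumes t: "t > 0" and QM: "Q ** wN t 1 cs = mat 1" and MQ: "wN t 1 cs ** Q = mat 1"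
    and P: "P = A \<or> P = B" and R: "R = A \<or> R = B"
  shows "dotv (fv R) (Q *v fv P) \<ge> 0"
proof -
  have PS: "P \<subseteq> A \<union> B" and RS: "R \<subseteq> A \<union> B" using P R by auto
  define u where "u = Q *v fv P"
  have Mu: "wN t 1 cs *v u = fv P" by (simp add: u_def matrix_vector_mul_assoc MQ)
  note we = wN_eq[OF good_cs t _ Mu sum_fv]
  have eq: "\<And>i. t * u$i + (\<Sum>k\<in>UNIV. cs i k * (u$i - u$k)) = fv P $ i" using we(2) by simp
  have su: "(\<Sum>i\<in>UNIV. u$i) = 0" using we(1) by simp
  have uxy: "u$x = u$y" using Qv_inv[OF QM MQ, of "fv P" y] fv_inv[OF P] by (simp add: u_def ay)
  obtain m where m: "\<forall>v. u$v \<le> u$m" "t * u$m \<le> fv P $ m" using maxp[OF good_cs t eq] by blast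
  have mx: "\<forall>v. u$v \<le> u$x"
  proof (cases "m = x \<or> m = y")
    case True then show ?thesis using m(1) uxy by auto
  next
    case False
    then have "fv P $ m \<le> 0" by (simp add: fv_comp[OF PS])
    then have "u$m \<le> 0" using m(2) t by (smt (verit) mult_pos_pos)
    then have "\<forall>v. u$v \<le> 0" using m(1) by (meson order.trans)
    then have "u = 0" using all_zero[OF _ su] by (simp add: vec_eq_iff)
    then show ?thesis by simp
  qed
  have "dotv (fv R) u = (\<Sum>i\<in>UNIV. real (card R) * (pv$i * u$i)) - (\<Sum>i\<in>UNIV. if i \<in> R then u$i else 0)"
  proof -
    have "dotv (fv R) u = (\<Sum>i\<in>UNIV. real (card R) * (pv$i * u$i) - (if i \<in> R then u$i else 0))"
      unfolding dotv_def by (intro sum.cong refl) (simp add: fv_def algebra_simps)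
    then show ?thesis by (simp add: sum_subtractf)
  qed
  also have "(\<Sum>i\<in>UNIV. pv$i * u$i) = u$x"
  proof -
    have "(\<Sum>i\<in>UNIV. pv$i * u$i) = (\<Sum>i\<in>UNIV. ((if i = x then u$i else 0) + (if i = y then u$i else 0)) / 2)"
      by (intro sum.cong refl) (auto simp: pv_def)
    also have "\<dots> = (\<Sum>i\<in>UNIV. (if i = x then u$i else 0) + (if i = y then u$i else 0)) / 2"
      by (simp add: sum_divide_distrib)
    also have "\<dots> = u$x" using uxy by (simp add: sum.distrib sum.delta')
    finally show ?thesis .
  qed
  then have "(\<Sum>i\<in>UNIV. real (card R) * (pv$i * u$i)) = real (card R) * u$x" by (simp add: sum_distrib_left[symmetric])
  also have "(\<Sum>i\<in>UNIV. if i \<in> R then u$i else 0) = (\<Sum>i\<in>R. u$i)" by (simp add: sum.If_cases)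
  also have "real (card R) * u$x - (\<Sum>i\<in>R. u$i) = (\<Sum>i\<in>R. u$x - u$i)" by (simp add: sum_subtractf)
  also have "\<dots> \<ge> 0" using mx by (intro sum_nonneg) auto
  finally show ?thesis by (simp add: u_def)
qed

end

context kel begin

lemma det_ineq:
  assumes t: "t > 0"
  shows "det (wN t 1 (indf F0)) \<le> det (wN t 1 (indf G0))"
proof -
  let ?M = "wN t 1 cs"
  obtain Q where QM: "Q ** ?M = mat 1" and MQ: "?M ** Q = mat 1"
    using wN_inverse(1)[OF good_cs t, of 1] by auto
  have dpos: "det ?M > 0" using wN_det_pos[OF good_cs t] .
  define \<delta> where "\<delta> = dotv dv (dv v* Q)"
  have \<delta>0: "\<delta> \<ge> 0" unfolding \<delta>_def by (rule delta_nonneg[OF t QM MQ])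
  have zz: "dotv z (z v* Q) = dotv z (Q *v z)" for z by (metis dotv_comm dotv_vm)
  have dG: "det (wN t 1 (indf G0)) = det ?M * (1 - \<delta> * dotv zG (Q *v zG))"
    unfolding NG_eq \<delta>_def zz[symmetric]
    by (rule det_rank2[OF QM dotv_anti(1)[OF QM MQ dv_anti zG_inv] dotv_anti(2)[OF QM MQ dv_anti zG_inv]])
  have dF: "det (wN t 1 (indf F0)) = det ?M * (1 - \<delta> * dotv zF (Q *v zF))"
    unfolding NF_eq \<delta>_def zz[symmetric]
    by (rule det_rank2[OF QM dotv_anti(1)[OF QM MQ dv_anti zF_inv] dotv_anti(2)[OF QM MQ dv_anti zF_inv]])
  have p1: "dotv (fv B) (Q *v fv A) \<ge> 0" by (rule zeta_part[OF t QM MQ]) auto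
  have p2: "dotv (fv A) (Q *v fv B) \<ge> 0" by (rule zeta_part[OF t QM MQ]) auto
  have "dotv zF (Q *v zF) - dotv zG (Q *v zG) = (dotv (fv B) (Q *v fv A) + dotv (fv A) (Q *v fv B)) / 2"
    by (simp add: zF_def zG_def mv_lin dotv_lin algebra_simps)
  then have "dotv zG (Q *v zG) \<le> dotv zF (Q *v zF)" using p1 p2 by simp
  then have "1 - \<delta> * dotv zF (Q *v zF) \<le> 1 - \<delta> * dotv zG (Q *v zG)"
    using \<delta>0 by (simp add: mult_left_mono)
  then show ?thesis unfolding dG dF using dpos by (simp add: mult_left_mono)
qed

end

lemma poly_det: fixes Mp :: "real poly^'n::finite^'n"
  shows "poly (det Mp) a = det (\<chi> i j. poly (Mp$i$j) a)"
  unfolding det_def by (simp add: poly_sum poly_prod)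

lemma det_ker: fixes A :: "real^'n::finite^'n"
  assumes "A *v v = 0" "v \<noteq> 0" shows "det A = 0"
proof (rule ccontr)
  assume "det A \<noteq> 0"
  then have "invertible A" by (simp add: invertible_det_nz)
  then obtain B where "B ** A = mat 1" by (auto simp: invertible_left_inverse)
  then have "v = B *v (A *v v)" by (simp add: matrix_vector_mul_assoc)
  then show False using assms by simp
qed

lemma card_as_sum: "real (card {u::'a::finite. P u}) = (\<Sum>j\<in>UNIV. if P j then 1 else 0)"
  using sum_ind_card[of "{u. P u}"] by simp

lemma lap_eval:
  fixes E :: "'a::finite \<Rightarrow> 'a \<Rightarrow> bool"
  assumes lam: "lam \<noteq> 0"
  shows "poly (lap_poly E) lam = det (\<chi> i j. (if i = j then lam else 0) - laplacian E $ i $ j) / lam"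
proof -
  let ?cp = "lap_charpoly E"
  have ev: "poly ?cp a = det (\<chi> i j. (if i = j then a else 0) - laplacian E $ i $ j)" for a
    unfolding lap_charpoly_def poly_det by (intro arg_cong[where f=det]) (simp add: vec_eq_iff)
  have rows: "(\<Sum>j\<in>UNIV. laplacian E $ i $ j) = 0" for i
  proof -
    have "(\<Sum>j\<in>UNIV. laplacian E $ i $ j) = (\<Sum>j\<in>UNIV. if i = j then real (degree E i) else 0) - (\<Sum>j\<in>UNIV. if E i j then 1 else 0)"
      by (simp add: laplacian_def sum_subtractf)
    also have "\<dots> = 0" by (simp add: Defs.degree_def nbhd_def card_as_sum)
    finally show ?thesis .
  qed
  have "(\<chi> i j. (if i = j then 0 else 0) - laplacian E $ i $ j) *v (\<chi> i. 1) = (0::real^'a)"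
    using rows by (simp add: matrix_vector_mult_def vec_eq_iff sum_negf)
  then have "poly ?cp 0 = 0" unfolding ev by (rule det_ker) (simp add: vec_eq_iff)
  then have "[:0,1:] dvd ?cp" using dvd_iff_poly_eq_0[of 0 ?cp] by simp
  then have h: "[:0,1:] * (?cp div [:0,1:]) = ?cp" by (rule dvd_mult_div_cancel)
  have eqn: "?cp = [:0,1:] * lap_poly E" unfolding lap_poly_def by (rule h[symmetric])
  have "poly ?cp lam = poly ([:0,1:] * lap_poly E) lam" using eqn by (rule arg_cong)
  also have "\<dots> = lam * poly (lap_poly E) lam" by simp
  finally have "poly ?cp lam = lam * poly (lap_poly E) lam" .
  then show ?thesis using lam ev[of lam] by (simp add: field_simps)
qed

lemma compl_matrix:
  fixes E :: "'a::finite \<Rightarrow> 'a \<Rightarrow> bool"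
  assumes sym: "\<And>u v. E u v \<Longrightarrow> E v u" and irr: "\<And>v. \<not> E v v"
  shows "(\<chi> i j. (if i = j then lam else 0) - laplacian (compl_graph E) $ i $ j) = wN (lam - real CARD('a)) 1 (indf E)"
proof -
  have deg: "real (degree (compl_graph E) i) = real CARD('a) - 1 - real (degree E i)" for i
  proof -
    have "{u. compl_graph E i u} = UNIV - insert i {u. E i u}" by (auto simp: compl_graph_def)
    then have "card {u. compl_graph E i u} = CARD('a) - card (insert i {u. E i u})"
      by (simp add: card_Diff_subset)
    moreover have "card (insert i {u. E i u}) = card {u. E i u} + 1" using irr by simp
    moreover have "card (insert i {u. E i u}) \<le> CARD('a)" by (rule card_mono) auto
    ultimately show ?thesis by (simp add: Defs.degree_def nbhd_def of_nat_diff)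
  qed
  have rs: "(\<Sum>k\<in>UNIV. if E i k then 1 else 0) = real (Defs.degree E i)" for i
    by (simp add: Defs.degree_def nbhd_def card_as_sum)
  show ?thesis
    using irr by (auto simp: vec_eq_iff wN_def laplacian_def deg rs indf_def compl_graph_def)
qed

theorem mainTheorem4:
  fixes G :: "'a::finite \<Rightarrow> 'a \<Rightarrow> bool" and K :: "'a set" and x y :: 'a
  assumes "simple_graph G" and "x \<noteq> y" and "x \<in> K" and "y \<in> K"
    and "symmetric_Kxy G K x y"
  shows "num_spanning_trees G \<ge> num_spanning_trees (Kxy_op G K x y)
    \<and> num_spanning_trees (compl_graph G) \<ge> num_spanning_trees (compl_graph (Kxy_op G K x y))
    \<and> (\<forall>lam::real. lam \<ge> real CARD('a) \<longrightarrow>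
         poly (lap_poly (compl_graph G)) lam \<ge> poly (lap_poly (compl_graph (Kxy_op G K x y))) lam)"
proof -
  define X where "X = Xset G K x y"
  define Y where "Y = Xset G K y x"
  define H where "H = remove_xXyY G K x y"
  obtain \<alpha> where aut: "graph_automorphism H \<alpha>" and ax: "\<alpha> x = y" and ay: "\<alpha> y = x"
      and fixS: "\<forall>v\<in>X \<union> Y. \<alpha> v = v"
    using assms(5) unfolding symmetric_Kxy_def H_def X_def Y_def by blast
  have Gsym: "\<And>u v. G u v \<Longrightarrow> G v u" and Girr: "\<And>v. \<not> G v v"
    using assms(1) by (auto simp: simple_graph_def)
  have Xd: "w \<in> X \<longleftrightarrow> G x w \<and> w \<notin> K \<and> \<not> G y w" for w by (auto simp: X_def Xset_def nbhd_def)
  have Yd: "w \<in> Y \<longleftrightarrow> G y w \<and> w \<notin> K \<and> \<not> G x w" for w by (auto simp: Y_def Xset_def nbhd_def)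
  have Hd: "H u v \<longleftrightarrow> G u v \<and> \<not> (\<exists>w\<in>X. {u,v} = {x,w}) \<and> \<not> (\<exists>w\<in>Y. {u,v} = {y,w})" for u v
    by (simp add: H_def remove_xXyY_def X_def Y_def)
  have Hd2: "H u v \<longleftrightarrow> G u v \<and> \<not> (u = x \<and> v \<in> X) \<and> \<not> (v = x \<and> u \<in> X) \<and> \<not> (u = y \<and> v \<in> Y) \<and> \<not> (v = y \<and> u \<in> Y)" for u v
    unfolding Hd by (auto simp: doubleton_eq_iff)
  have xyS: "x \<notin> X \<union> Y" "y \<notin> X \<union> Y" using assms(3,4) Xd Yd by auto
  have XY: "X \<inter> Y = {}" using Xd Yd by auto
  interpret k1: kel H \<alpha> x y X Y
  proof
    show "\<And>u v. H u v \<Longrightarrow> H v u" using Gsym unfolding Hd2 by blast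
    show "\<And>v. \<not> H v v" using Girr unfolding Hd2 by blast
    show "bij \<alpha>" using aut by (simp add: graph_automorphism_def)
    show "\<And>u v. H (\<alpha> u) (\<alpha> v) = H u v" using aut by (simp add: graph_automorphism_def)
  qed (use assms(2) ax ay XY xyS fixS Xd Yd Hd2 in auto)
  have G_eq: "G = addE (addE H x X) y Y"
    using Gsym Xd Yd by (intro ext) (auto simp: addE_def Hd2)
  have F_eq: "Kxy_op G K x y = addE H y (X \<union> Y)"
  proof (intro ext)
    fix u v
    have "Kxy_op G K x y u v \<longleftrightarrow> (G u v \<and> \<not> (u = x \<and> v \<in> X) \<and> \<not> (v = x \<and> u \<in> X)) \<or> (u = y \<and> v \<in> X) \<or> (v = y \<and> u \<in> X)"
      using assms(2,3,4) Xd by (auto simp: Kxy_op_def X_def[symmetric] doubleton_eq_iff)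
    then show "Kxy_op G K x y u v = addE H y (X \<union> Y) u v"
      using Gsym Xd Yd assms(2,3,4) by (auto simp: addE_def Hd2)
  qed
  define H' where "H' = (\<lambda>u v. u \<noteq> v \<and> \<not> H u v \<and> \<not> ((u = x \<or> u = y) \<and> v \<in> X \<union> Y) \<and> \<not> ((v = x \<or> v = y) \<and> u \<in> X \<union> Y))"
  interpret k2: kel H' \<alpha> y x X Y
  proof
    show "\<And>u v. H' u v \<Longrightarrow> H' v u" using k1.Hsym unfolding H'_def by blast
    show "\<And>v. \<not> H' v v" by (simp add: H'_def)
    show "bij \<alpha>" by (rule k1.bij)
    show "H' (\<alpha> u) (\<alpha> v) = H' u v" for u v
      using k1.aut[of u v] k1.alpha_x_iff[of u] k1.alpha_x_iff[of v] k1.alpha_S_iff[of u] k1.alpha_S_iff[of v]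
        k1.inj_alpha by (auto simp: H'_def inj_eq)
  qed (use assms(2) ax ay XY xyS fixS in \<open>auto simp: H'_def\<close>)
  have cG_eq: "compl_graph G = addE (addE H' y X) x Y"
    by (intro ext) (use Gsym Xd Yd assms(2,3,4) in \<open>auto simp: compl_graph_def addE_def H'_def Hd2\<close>)
  have cF_eq: "compl_graph (Kxy_op G K x y) = addE H' x (X \<union> Y)"
    unfolding F_eq by (intro ext) (use Gsym Xd Yd assms(2,3,4) in \<open>auto simp: compl_graph_def addE_def H'_def Hd2\<close>)
  have c1: "num_spanning_trees (Kxy_op G K x y) \<le> num_spanning_trees G"
    using k1.trees_le by (simp add: F_eq G_eq[symmetric])
  have c2: "num_spanning_trees (compl_graph (Kxy_op G K x y)) \<le> num_spanning_trees (compl_graph G)"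
  proof -
    have "addE (addE H' y X) x Y = addE (addE H' x Y) y X" by (intro ext) (auto simp: addE_def)
    then show ?thesis using k2.trees_le by (simp add: cF_eq cG_eq Un_commute)
  qed
  let ?F = "Kxy_op G K x y"
  have Fsym: "\<And>u v. ?F u v \<Longrightarrow> ?F v u" unfolding F_eq using k1.Hsym by (auto simp: addE_def)
  have Firr: "\<And>v. \<not> ?F v v" unfolding F_eq using k1.Hirr xyS by (auto simp: addE_def)
  define g where "g lam = poly (lap_poly (compl_graph G)) lam - poly (lap_poly (compl_graph ?F)) lam" for lam
  have gpos: "g lam \<ge> 0" if lam: "lam > real CARD('a)" for lam
  proof -
    have l0: "lam > 0" using lam by (smt (verit) of_nat_0_less_iff zero_less_card_finite)
    define t where "t = lam - real CARD('a)"
    have t: "t > 0" using lam by (simp add: t_def)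
    have eG: "poly (lap_poly (compl_graph G)) lam = det (wN t 1 (indf G)) / lam"
      using lap_eval[of lam "compl_graph G"] l0 compl_matrix[where E=G and lam=lam, OF Gsym Girr] by (simp add: t_def)
    have eF: "poly (lap_poly (compl_graph ?F)) lam = det (wN t 1 (indf ?F)) / lam"
      using lap_eval[of lam "compl_graph ?F"] l0 compl_matrix[where E="?F" and lam=lam, OF Fsym Firr] by (simp add: t_def)
    have "det (wN t 1 (indf ?F)) \<le> det (wN t 1 (indf G))"
      using k1.det_ineq[OF t] by (simp add: F_eq G_eq[symmetric])
    then show ?thesis unfolding g_def eG eF using l0 by (simp add: divide_right_mono)
  qed
  have c3: "\<forall>lam::real. lam \<ge> real CARD('a) \<longrightarrow> poly (lap_poly (compl_graph G)) lam \<ge> poly (lap_poly (compl_graph ?F)) lam"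
  proof (intro allI impI)
    fix lam :: real assume le: "lam \<ge> real CARD('a)"
    have "g lam \<ge> 0"
    proof (cases "lam > real CARD('a)")
      case True then show ?thesis by (rule gpos)
    next
      case False
      then have eq: "lam = real CARD('a)" using le by simp
      have cont: "isCont g lam" unfolding g_def by simp
      then have "(g \<longlongrightarrow> g lam) (at_right lam)"
        by (simp add: isCont_def filterlim_at_split)
      moreover have "\<forall>\<^sub>F z in at_right lam. 0 \<le> g z"
        using eq gpos by (intro eventually_at_rightI[of lam "lam + 1"]) auto
      ultimately show ?thesis by (rule tendsto_lowerbound) simp
    qed
    then show "poly (lap_poly (compl_graph G)) lam \<ge> poly (lap_poly (compl_graph ?F)) lam" by (simp add: g_def)
  qed
  show ?thesis using c1 c2 c3 by simp
qed

end
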